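(* Let $A$ be a finite alphabet with $|A|\ge 2$ and $k\ge 1$. Let $T_n = \{\langle\vec h\rangle \mid \vec h \in \mathcal{R}_{\le n}^k\}$ be the set of subgroups of $F(A)$ generated by a $k$-tuple of reduced words of length at most $n$, and let $\mathbb{Q}_n$ be the uniform probability law on $T_n$. Let $X_n$ be the set of subgroups in $T_n$ that are both malnormal and pure. Then $1-\mathbb{Q}_n(X_n) = \mathcal{O}(e^{-cn})$ for some $c>0$.
   Context: $F(A)$ is the free group on $A$, identified with reduced words over $\tilde A = A\cup\bar A$ ($\bar a$ representing $a^{-1}$; a word is reduced if it has no factor $a\bar a$ or $\bar a a$); $\mathcal{R}_{\le n}$ is the set of reduced words of length at most $n$. A subgroup $H$ of $F(A)$ is malnormal if $g^{-1}Hg\cap H = \{1\}$ for every $g\notin H$, and pure if $x^m\in H$ with $m\ne 0$ implies $x\in H$ for every $x\in F(A)$. *)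

theory Defs
  imports "HOL-Algebra.Group" "HOL-Algebra.Generated_Groups" "HOL-Library.Landau_Symbols"
begin

text \<open>Letters of the extended alphabet: (a, False) represents a, (a, True) represents its
  formal inverse a-bar.\<close>
type_synonym 'a letter = "'a \<times> bool"

definition inv_letter :: "'a letter \<Rightarrow> 'a letter" where
  "inv_letter x = (fst x, \<not> snd x)"

fun reduced :: "'a letter list \<Rightarrow> bool" where
  "reduced [] = True"
| "reduced [x] = True"
| "reduced (x # y # ys) = (y \<noteq> inv_letter x \<and> reduced (y # ys))"

fun reduce :: "'a letter list \<Rightarrow> 'a letter list" where
  "reduce [] = []"
| "reduce (x # xs) =
     (case reduce xs of [] \<Rightarrow> [x]
      | y # ys \<Rightarrow> (if y = inv_letter x then ys else x # y # ys))"

definition free_grp :: "'a set \<Rightarrow> ('a letter list) monoid" where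
  "free_grp A = \<lparr> carrier = {w. reduced w \<and> fst ` set w \<subseteq> A},
                  mult = (\<lambda>u v. reduce (u @ v)),
                  one = [] \<rparr>"

definition red_le :: "'a set \<Rightarrow> nat \<Rightarrow> 'a letter list set" where
  "red_le A n = {w \<in> carrier (free_grp A). length w \<le> n}"

definition T_set :: "'a set \<Rightarrow> nat \<Rightarrow> nat \<Rightarrow> 'a letter list set set" where
  "T_set A k n = (\<lambda>hs. generate (free_grp A) (set hs)) ` {hs. length hs = k \<and> set hs \<subseteq> red_le A n}"

definition malnormal :: "('g, 'b) monoid_scheme \<Rightarrow> 'g set \<Rightarrow> bool" where
  "malnormal G H \<longleftrightarrow>
     (\<forall>g \<in> carrier G - H. {inv\<^bsub>G\<^esub> g \<otimes>\<^bsub>G\<^esub> h \<otimes>\<^bsub>G\<^esub> g | h. h \<in> H} \<inter> H = {\<one>\<^bsub>G\<^esub>})"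

definition pure :: "('g, 'b) monoid_scheme \<Rightarrow> 'g set \<Rightarrow> bool" where
  "pure G H \<longleftrightarrow>
     (\<forall>x \<in> carrier G. \<forall>m::int. m \<noteq> 0 \<and> x [^]\<^bsub>G\<^esub> m \<in> H \<longrightarrow> x \<in> H)"

definition X_set :: "'a set \<Rightarrow> nat \<Rightarrow> nat \<Rightarrow> 'a letter list set set" where
  "X_set A k n = {H \<in> T_set A k n. malnormal (free_grp A) H \<and> pure (free_grp A) H}"

definition Q_X :: "'a set \<Rightarrow> nat \<Rightarrow> nat \<Rightarrow> real" where
  "Q_X A k n = real (card (X_set A k n)) / real (card (T_set A k n))"

end

theory Submission
  imports Defs "HOL-Real_Asymp.Real_Asymp"
begin

section \<open>Words\<close>

lemma inv_letter_inv[simp]: "inv_letter (inv_letter x) = x"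
  by (simp add: inv_letter_def)

lemma inv_letter_neq[simp]: "inv_letter x \<noteq> x" "x \<noteq> inv_letter x"
  by (auto simp: inv_letter_def prod_eq_iff)

lemma inv_letter_eq_iff: "inv_letter x = y \<longleftrightarrow> x = inv_letter y"
  by auto

lemma fst_inv_letter[simp]: "fst (inv_letter x) = fst x"
  by (simp add: inv_letter_def)

definition invw :: "'a letter list \<Rightarrow> 'a letter list" where
  "invw w = rev (map inv_letter w)"

lemma invw_Nil[simp]: "invw [] = []" by (simp add: invw_def)
lemma invw_Cons: "invw (x # w) = invw w @ [inv_letter x]" by (simp add: invw_def)
lemma invw_append[simp]: "invw (u @ v) = invw v @ invw u" by (simp add: invw_def)
lemma invw_invw[simp]: "invw (invw w) = w" by (simp add: invw_def rev_map comp_def)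
lemma length_invw[simp]: "length (invw w) = length w" by (simp add: invw_def)
lemma invw_eq_Nil[simp]: "invw w = [] \<longleftrightarrow> w = []" by (simp add: invw_def)
lemma fst_set_invw[simp]: "fst ` set (invw w) = fst ` set w"
  by (force simp: invw_def image_iff)
lemma invw_inj: "invw u = invw v \<longleftrightarrow> u = v"
  by (metis invw_invw)
lemma nth_invw: "i < length w \<Longrightarrow> invw w ! i = inv_letter (w ! (length w - Suc i))"
  by (simp add: invw_def rev_nth)

lemma take_invw: "take n (invw w) = invw (drop (length w - n) w)"
  by (simp add: invw_def take_map take_rev drop_map)
lemma drop_invw: "drop n (invw w) = invw (take (length w - n) w)"
  by (simp add: invw_def drop_map drop_rev take_map)

lemma reduced_Cons: "reduced (x # xs) \<longleftrightarrow> reduced xs \<and> (xs \<noteq> [] \<longrightarrow> hd xs \<noteq> inv_letter x)"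
  by (cases xs) auto

lemma reduced_append:
  "reduced (xs @ ys) \<longleftrightarrow> reduced xs \<and> reduced ys \<and>
     (xs \<noteq> [] \<longrightarrow> ys \<noteq> [] \<longrightarrow> hd ys \<noteq> inv_letter (last xs))"
  by (induction xs) (auto simp: reduced_Cons)

lemma reduced_nth:
  "reduced w \<longleftrightarrow> (\<forall>i. Suc i < length w \<longrightarrow> w ! Suc i \<noteq> inv_letter (w ! i))"
proof (induction w)
  case Nil then show ?case by simp
next
  case (Cons x w)
  show ?case
  proof
    assume r: "reduced (x # w)"
    show "\<forall>i. Suc i < length (x # w) \<longrightarrow> (x # w) ! Suc i \<noteq> inv_letter ((x # w) ! i)"
    proof (intro allI impI)
      fix i assume i: "Suc i < length (x # w)"
      show "(x # w) ! Suc i \<noteq> inv_letter ((x # w) ! i)"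
      proof (cases i)
        case 0 then show ?thesis using r i by (cases w) auto
      next
        case (Suc j) then show ?thesis using r i Cons.IH by (auto simp: reduced_Cons)
      qed
    qed
  next
    assume h: "\<forall>i. Suc i < length (x # w) \<longrightarrow> (x # w) ! Suc i \<noteq> inv_letter ((x # w) ! i)"
    have "reduced w"
      using h Cons.IH by (metis Suc_less_eq length_Cons nth_Cons_Suc)
    moreover have "w \<noteq> [] \<longrightarrow> hd w \<noteq> inv_letter x"
      using h[rule_format, of 0] by (cases w) auto
    ultimately show "reduced (x # w)" by (simp add: reduced_Cons)
  qed
qed

lemma reduced_invw[simp]: "reduced (invw w) \<longleftrightarrow> reduced w"
proof (induction w)
  case Nil then show ?case by simp
next
  case (Cons x w)
  then show ?case
    by (cases w) (auto simp: invw_Cons reduced_append reduced_Cons invw_def last_rev hd_map)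
qed

lemma reduced_take: "reduced w \<Longrightarrow> reduced (take n w)"
  by (metis append_take_drop_id reduced_append)
lemma reduced_drop: "reduced w \<Longrightarrow> reduced (drop n w)"
  by (metis append_take_drop_id reduced_append)

definition cons_red :: "'a letter \<Rightarrow> 'a letter list \<Rightarrow> 'a letter list" where
  "cons_red x ys = (case ys of [] \<Rightarrow> [x] | y # ys' \<Rightarrow> (if y = inv_letter x then ys' else x # y # ys'))"

lemma reduce_Cons': "reduce (x # xs) = cons_red x (reduce xs)"
  by (simp add: cons_red_def)

lemma reduced_cons_red: "reduced ys \<Longrightarrow> reduced (cons_red x ys)"
  by (cases ys) (auto simp: cons_red_def reduced_Cons)

lemma reduced_reduce[simp]: "reduced (reduce w)"
  by (induction w) (auto simp: reduce_Cons' reduced_cons_red simp del: reduce.simps(2))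

lemma reduce_reduced: "reduced w \<Longrightarrow> reduce w = w"
  by (induction w) (auto simp: reduce_Cons' reduced_Cons cons_red_def split: list.splits simp del: reduce.simps(2))

lemma cons_red_cancel: "reduced z \<Longrightarrow> cons_red x (cons_red (inv_letter x) z) = z"
  by (cases z) (auto simp: cons_red_def reduced_Cons split: list.splits)

lemma reduce_append_right: "reduce (xs @ ys) = reduce (xs @ reduce ys)"
  by (induction xs) (auto simp: reduce_Cons' reduce_reduced simp del: reduce.simps(2))

lemma reduce_cons_red_append: "reduce (cons_red x r @ ys) = cons_red x (reduce (r @ ys))"
proof (cases r)
  case Nil then show ?thesis by (simp add: cons_red_def reduce_Cons' del: reduce.simps(2))
next
  case (Cons y r')
  show ?thesis
  proof (cases "y = inv_letter x")
    case True
    then have "cons_red x (reduce (r @ ys)) = cons_red x (cons_red (inv_letter x) (reduce (r' @ ys)))"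
      using Cons by (simp add: reduce_Cons' del: reduce.simps(2))
    also have "\<dots> = reduce (r' @ ys)" by (simp add: cons_red_cancel)
    finally show ?thesis using Cons True by (simp add: cons_red_def)
  next
    case False then show ?thesis using Cons by (simp add: cons_red_def reduce_Cons' del: reduce.simps(2))
  qed
qed

lemma reduce_append_left: "reduce (xs @ ys) = reduce (reduce xs @ ys)"
  by (induction xs) (auto simp: reduce_Cons' reduce_cons_red_append simp del: reduce.simps(2))

lemma reduce_reduce[simp]: "reduce (reduce w) = reduce w"
  by (simp add: reduce_reduced)

lemma reduce_assoc: "reduce (reduce (x @ y) @ z) = reduce (x @ reduce (y @ z))"
  by (metis append_assoc reduce_append_left reduce_append_right)

lemma reduce_cancel_invw: "reduce (z @ invw z @ ys) = reduce ys"
proof (induction z arbitrary: ys)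
  case Nil then show ?case by simp
next
  case (Cons a z)
  have "reduce ((a # z) @ invw (a # z) @ ys) = cons_red a (reduce (z @ invw z @ (inv_letter a # ys)))"
    by (simp add: invw_Cons reduce_Cons' del: reduce.simps(2))
  also have "\<dots> = cons_red a (reduce (inv_letter a # ys))" using Cons by simp
  also have "\<dots> = reduce ys" by (simp add: reduce_Cons' cons_red_cancel del: reduce.simps(2))
  finally show ?case .
qed

lemma reduce_cancel_invw': "reduce (invw z @ z @ ys) = reduce ys"
  using reduce_cancel_invw[of "invw z"] by simp

lemma reduce_mid_cancel: "reduce (xs @ z @ invw z @ ys) = reduce (xs @ ys)"
  by (metis reduce_append_right reduce_cancel_invw)
lemma reduce_mid_cancel': "reduce (xs @ invw z @ z @ ys) = reduce (xs @ ys)"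
  by (metis reduce_append_right reduce_cancel_invw')

lemma length_cons_red: "length (cons_red x ys) \<le> Suc (length ys)"
  by (cases ys) (auto simp: cons_red_def)

lemma length_reduce_le: "length (reduce w) \<le> length w"
proof (induction w)
  case (Cons x w) then show ?case using length_cons_red[of x "reduce w"]
    by (simp add: reduce_Cons' del: reduce.simps(2))
qed simp

lemma set_cons_red: "set (cons_red x ys) \<subseteq> insert x (set ys)"
  by (cases ys) (auto simp: cons_red_def)

lemma set_reduce: "set (reduce w) \<subseteq> set w"
proof (induction w)
  case (Cons x w) then show ?case using set_cons_red[of x "reduce w"]
    by (auto simp: reduce_Cons' simp del: reduce.simps(2))
qed simp

lemma invw_reduced_nonempty: "reduced w \<Longrightarrow> w \<noteq> [] \<Longrightarrow> invw w \<noteq> w"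
proof
  assume r: "reduced w" and ne: "w \<noteq> []" and e: "invw w = w"
  let ?L = "length w"
  have key: "\<And>i. i < ?L \<Longrightarrow> w ! i = inv_letter (w ! (?L - Suc i))"
    using e nth_invw by metis
  show False
  proof (cases "even ?L")
    case True
    then obtain m where m: "?L = 2 * m" by blast
    with ne have "m \<ge> 1" by (cases m) auto
    have "w ! (m - 1) = inv_letter (w ! (?L - Suc (m - 1)))" using key[of "m - 1"] m \<open>m \<ge> 1\<close> by simp
    moreover have "?L - Suc (m - 1) = Suc (m - 1)" using m \<open>m \<ge> 1\<close> by simp
    ultimately have "w ! Suc (m - 1) = inv_letter (w ! (m - 1))" by simp
    moreover have "Suc (m - 1) < ?L" using m \<open>m \<ge> 1\<close> by simp
    ultimately show False using r by (simp add: reduced_nth)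
  next
    case False
    then obtain m where m: "?L = 2 * m + 1" by (metis oddE)
    have "w ! m = inv_letter (w ! (?L - Suc m))" using key[of m] m by simp
    moreover have "?L - Suc m = m" using m by simp
    ultimately show False by simp
  qed
qed

lemma reduced_self_inv_prefix: "reduced (x @ invw x) \<Longrightarrow> x = []"
proof (rule ccontr)
  assume r: "reduced (x @ invw x)" and ne: "x \<noteq> []"
  have "hd (invw x) = inv_letter (last x)"
    using ne by (simp add: invw_def hd_rev last_map)
  then show False using r ne by (simp add: reduced_append)
qed

section \<open>Cancellation\<close>

lemma cancel_decomp:
  assumes "reduced x" "reduced y"
  shows "\<exists>c. c \<le> length x \<and> c \<le> length y \<and> take c y = take c (invw x) \<and>
             reduce (x @ y) = take (length x - c) x @ drop c y"
  using assms
proof (induction "length x" arbitrary: x y)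
  case 0 then show ?case by (auto intro!: exI[of _ 0] simp: reduce_reduced)
next
  case (Suc m)
  then obtain x0 a where x: "x = x0 @ [a]" by (metis length_Suc_conv_rev)
  have rx0: "reduced x0" using Suc.prems x by (simp add: reduced_append)
  show ?case
  proof (cases "y \<noteq> [] \<and> hd y = inv_letter a")
    case True
    then obtain y0 where y: "y = inv_letter a # y0" by (cases y) auto
    have ry0: "reduced y0" using Suc.prems y by (simp add: reduced_Cons)
    obtain c where c: "c \<le> length x0" "c \<le> length y0" "take c y0 = take c (invw x0)"
      "reduce (x0 @ y0) = take (length x0 - c) x0 @ drop c y0"
      using Suc.hyps(1)[of x0 y0] x Suc.hyps(2) rx0 ry0 by auto
    have "reduce (x @ y) = reduce (x0 @ [a] @ invw [a] @ y0)" using x y by (simp add: invw_def)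
    also have "\<dots> = reduce (x0 @ y0)" by (rule reduce_mid_cancel)
    finally have e: "reduce (x @ y) = take (length x0 - c) x0 @ drop c y0" using c by simp
    show ?thesis
      apply (rule exI[of _ "Suc c"])
      using c x y e by (auto simp: invw_def)
  next
    case False
    have "reduced (x @ y)" using Suc.prems False x by (auto simp: reduced_append reduced_Cons)
    then show ?thesis by (auto intro!: exI[of _ 0] simp: reduce_reduced)
  qed
qed

section \<open>The free group\<close>

lemma free_grp_simps[simp]:
  "carrier (free_grp A) = {w. reduced w \<and> fst ` set w \<subseteq> A}"
  "mult (free_grp A) u v = reduce (u @ v)"
  "one (free_grp A) = []"
  by (simp_all add: free_grp_def)

lemma group_free_grp: "group (free_grp A)"
proof (rule groupI)
  fix x y assume "x \<in> carrier (free_grp A)" "y \<in> carrier (free_grp A)"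
  then show "x \<otimes>\<^bsub>free_grp A\<^esub> y \<in> carrier (free_grp A)"
    using set_reduce[of "x @ y"] by fastforce
next
  show "\<one>\<^bsub>free_grp A\<^esub> \<in> carrier (free_grp A)" by simp
next
  fix x y z show "x \<otimes>\<^bsub>free_grp A\<^esub> y \<otimes>\<^bsub>free_grp A\<^esub> z = x \<otimes>\<^bsub>free_grp A\<^esub> (y \<otimes>\<^bsub>free_grp A\<^esub> z)"
    by (simp add: reduce_assoc)
next
  fix x assume "x \<in> carrier (free_grp A)"
  then show "\<one>\<^bsub>free_grp A\<^esub> \<otimes>\<^bsub>free_grp A\<^esub> x = x" by (simp add: reduce_reduced)
next
  fix x assume x: "x \<in> carrier (free_grp A)"
  show "\<exists>y\<in>carrier (free_grp A). y \<otimes>\<^bsub>free_grp A\<^esub> x = \<one>\<^bsub>free_grp A\<^esub>"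
    using x reduce_cancel_invw'[of x "[]"] by (intro bexI[of _ "invw x"]) (auto simp: reduce_reduced)
qed

lemma inv_free_grp: "x \<in> carrier (free_grp A) \<Longrightarrow> inv\<^bsub>free_grp A\<^esub> x = invw x"
  using group.inv_equality[OF group_free_grp[of A], of "invw x" x] reduce_cancel_invw'[of x "[]"] by (auto simp: reduce_reduced)

locale petals =
  fixes P :: "'a letter list set" and l n :: nat
  assumes P_red: "w \<in> P \<Longrightarrow> reduced w"
    and P_inv: "w \<in> P \<Longrightarrow> invw w \<in> P"
    and P_len: "w \<in> P \<Longrightarrow> n - l \<le> length w"
    and l_pos: "1 \<le> l" and nl: "8 * l \<le> n"
    and P_win: "\<And>w1 w2 p1 p2. w1 \<in> P \<Longrightarrow> w2 \<in> P \<Longrightarrow> p1 + l \<le> length w1 \<Longrightarrow> p2 + l \<le> length w2 \<Longrightarrow>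
        take l (drop p1 w1) = take l (drop p2 w2) \<Longrightarrow> w1 = w2 \<and> p1 = p2"
begin

lemma P_len7: "w \<in> P \<Longrightarrow> 7 * l \<le> length w"
  using P_len nl by fastforce

lemma P_take_inv: "w \<in> P \<Longrightarrow> take l w \<noteq> take l (invw w)"
proof
  assume w: "w \<in> P" and e: "take l w = take l (invw w)"
  have "w = invw w" using P_win[OF w P_inv[OF w], of 0 0] e P_len7[OF w] by simp
  moreover have "w \<noteq> []" using P_len7[OF w] l_pos by auto
  ultimately show False using invw_reduced_nonempty P_red[OF w] by metis
qed

definition prof :: "'a letter list \<Rightarrow> 'a letter list \<Rightarrow> 'a letter list \<Rightarrow> bool" where
  "prof h a b \<longleftrightarrow> a \<in> P \<and> b \<in> P \<and> reduced h \<and>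
     length a - l \<le> length h \<and> take (length a - l) h = take (length a - l) a \<and>
     length b - l \<le> length h \<and> drop (length h - (length b - l)) h = drop l b \<and>
     ((h = a \<and> b = a) \<or> length a + length b \<le> length h + 2 * l)"

lemma prof_invw: assumes "prof h a b" shows "prof (invw h) (invw b) (invw a)"
proof -
  have a: "a \<in> P" and b: "b \<in> P" using assms by (auto simp: prof_def)
  have la: "7 * l \<le> length a" and lb: "7 * l \<le> length b" using P_len7 a b by auto
  have t1: "take (length b - l) (invw h) = take (length b - l) (invw b)"
    using assms lb by (simp add: prof_def take_invw)
  have la': "length a - l \<le> length h" using assms by (simp add: prof_def)
  have t2: "drop (length h - (length a - l)) (invw h) = drop l (invw a)"
  proof -
    have "drop (length h - (length a - l)) (invw h) = invw (take (length h - (length h - (length a - l))) h)"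
      by (simp add: drop_invw)
    also have "length h - (length h - (length a - l)) = length a - l" using la' by simp
    finally show ?thesis using assms by (simp add: prof_def drop_invw)
  qed
  show ?thesis using assms t1 t2 P_inv a b by (auto simp: prof_def)
qed

definition minl :: "'a letter list \<Rightarrow> bool" where
  "minl g \<longleftrightarrow> (\<forall>w\<in>P. \<forall>j. j \<le> length g \<longrightarrow> j \<le> length w \<longrightarrow> take j g = take j w \<longrightarrow> 2 * j \<le> length w)"

lemma hlp:
  assumes "minl g" "w \<in> P" "take j g = take j x" "j \<le> length g" "j \<le> length x"
    "length w - l \<le> length x" "take (length w - l) x = take (length w - l) w"
  shows "2 * j \<le> length w"
proof -
  define j' where "j' = min j (length w - l)"
  have "take j' g = take j' x" using assms(3) by (metis j'_def min.cobounded1 take_take min_def)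
  also have "\<dots> = take j' w" using assms(7) by (metis j'_def min.cobounded2 take_take min_def)
  finally have "take j' g = take j' w" .
  moreover have "j' \<le> length g" "j' \<le> length w" using assms j'_def by auto
  ultimately have "2 * j' \<le> length w" using assms(1,2) by (auto simp: minl_def)
  moreover have "7 * l \<le> length w" using P_len7 assms(2) by auto
  ultimately show ?thesis using l_pos j'_def by (auto simp: min_def split: if_splits)
qed

lemma take_take_eq: "take k x = take k y \<Longrightarrow> m \<le> k \<Longrightarrow> take m x = take m y"
  by (metis min.absorb1 take_take)

lemma take_prefix_app: "m \<le> k \<Longrightarrow> k \<le> length h \<Longrightarrow> take m (take k h @ X) = take m h"
  by (simp add: min_def)
lemma take_drop_prefix_app: "s + m \<le> k \<Longrightarrow> k \<le> length h \<Longrightarrow> take m (drop s (take k h @ X)) = take m (drop s h)"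
  by (simp add: min_def take_drop)

lemma L12:
  assumes ph: "prof h a b" and rg: "reduced g" and mg: "minl g"
    and c: "c \<le> length h" "c \<le> length g" "take c g = take c (invw h)"
       "W = take (length h - c) h @ drop c g"
    and d: "d \<le> length g" "d \<le> length v" "take d v = take d (invw g)"
       "W = take (length g - d) g @ drop d v"
  shows "2 * c \<le> length b \<and> length g - d < length h - c \<and> 2 * (length g - d) \<le> length a"
proof -
  have a: "a \<in> P" and b: "b \<in> P" using ph by (auto simp: prof_def)
  have la: "7 * l \<le> length a" and lb: "7 * l \<le> length b" using P_len7 a b by auto
  have pih: "prof (invw h) (invw b) (invw a)" using prof_invw[OF ph] .
  have c2: "2 * c \<le> length b"
    using hlp[OF mg P_inv[OF b] c(3), of] c pih by (auto simp: prof_def)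
  define s where "s = length g - d"
  define p where "p = length h - c"
  define j0 where "j0 = min s p"
  have "take j0 W = take j0 h"
    using c(4) c(1) take_prefix_app[of j0 p h] by (simp add: j0_def p_def)
  moreover have "take j0 W = take j0 g"
    using d(4) d(1) take_prefix_app[of j0 s g] by (simp add: j0_def s_def)
  ultimately have tj0: "take j0 g = take j0 h" by simp
  have j02: "2 * j0 \<le> length a"
    using hlp[OF mg a tj0] ph c(1) d(1) by (auto simp: prof_def j0_def s_def p_def)
  have "s < p"
  proof (rule ccontr)
    assume "\<not> s < p"
    then have j0p: "j0 = p" by (simp add: j0_def)
    consider "h = a \<and> b = a" | "length a + length b \<le> length h + 2 * l" using ph by (auto simp: prof_def)
    then show False
    proof cases
      case 1
      then have cl: "l \<le> c" "l \<le> p" using j02 j0p c2 la p_def c(1) by auto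
      have "take l g = take l a" using tj0 cl 1 j0p take_take_eq by blast
      moreover have "take l g = take l (invw a)" using c(3) cl 1 take_take_eq by blast
      ultimately show False using P_take_inv[OF a] by simp
    next
      case 2
      have "p + c = length h" using p_def c(1) by simp
      then show False using 2 j02 j0p c2 la lb l_pos by linarith
    qed
  qed
  then show ?thesis using c2 j02 by (simp add: j0_def s_def p_def)
qed

lemma key:
  assumes ph: "prof h a b" and pv: "prof v a' b'" and rg: "reduced g" and mg: "minl g"
    and mg': "minl (invw g)" and rh: "reduced h" and rv: "reduced v"
    and e: "reduce (h @ g) = reduce (g @ v)"
  shows "g = []"
proof -
  have a: "a \<in> P" and b: "b \<in> P" using ph by (auto simp: prof_def)
  have a': "a' \<in> P" and b': "b' \<in> P" using pv by (auto simp: prof_def)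
  have la: "7 * l \<le> length a" and lb: "7 * l \<le> length b" using P_len7 a b by auto
  have la': "7 * l \<le> length a'" using P_len7 a' by auto
  obtain c where c: "c \<le> length h" "c \<le> length g" "take c g = take c (invw h)"
       "reduce (h @ g) = take (length h - c) h @ drop c g"
    using cancel_decomp[OF rh rg] by auto
  obtain d where d: "d \<le> length g" "d \<le> length v" "take d v = take d (invw g)"
       "reduce (g @ v) = take (length g - d) g @ drop d v"
    using cancel_decomp[OF rg rv] by auto
  define W where "W = reduce (h @ g)"
  have W1: "W = take (length h - c) h @ drop c g" using c W_def by simp
  have W2: "W = take (length g - d) g @ drop d v" using d e W_def by simp
  have m1: "2 * c \<le> length b \<and> length g - d < length h - c \<and> 2 * (length g - d) \<le> length a"
    using L12[OF ph rg mg c(1-3) W1 d(1-3) W2] .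
  have pv': "prof (invw v) (invw b') (invw a')" using prof_invw[OF pv] .
  have W1': "invw W = take (length (invw v) - d) (invw v) @ drop d (invw g)"
    using W2 d(1,2) by (simp add: take_invw drop_invw)
  have W2': "invw W = take (length (invw g) - c) (invw g) @ drop c (invw h)"
    using W1 c(1,2) by (simp add: take_invw drop_invw)
  have dd: "take d (invw g) = take d (invw (invw v))" using d(3) by simp
  have cc: "take c (invw h) = take c (invw (invw g))" using c(3) by simp
  have m2: "2 * d \<le> length (invw a')"
    using L12[OF pv' _ mg' _ _ dd W1' _ _ cc W2'] rg d(1,2) c(1,2) by simp
  define s where "s = length g - d"
  define p where "p = length h - c"
  have pl: "p \<le> length h" by (simp add: p_def)
  show ?thesis
  proof (cases "s + l \<le> p")
    case True
    have "take l (drop s W) = take l (drop s h)"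
      using W1 True take_drop_prefix_app[of s l p h] pl by (simp add: p_def[symmetric])
    also have "\<dots> = take l (drop s a)"
    proof -
      have "s + l \<le> length a - l" using m1 la s_def by linarith
      then have "take (s + l) h = take (s + l) a" using ph take_take_eq unfolding prof_def by blast
      then show ?thesis by (simp add: take_drop add.commute)
    qed
    finally have w1: "take l (drop s W) = take l (drop s a)" .
    have ds: "drop s W = drop d v" using W2 d(1) by (simp add: s_def)
    have "take l (drop d v) = take l (drop d a')"
    proof -
      have "d + l \<le> length a' - l" using m2 la' by simp
      then have "take (d + l) v = take (d + l) a'" using pv take_take_eq unfolding prof_def by blast
      then show ?thesis by (simp add: take_drop add.commute)
    qed
    then have "take l (drop s a) = take l (drop d a')" using w1 ds by simp
    moreover have "s + l \<le> length a" "d + l \<le> length a'" using m1 m2 la la' s_def by auto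
    ultimately have aa: "a = a' \<and> s = d" using P_win[OF a a'] by blast
    have tg: "take s g = take s a"
    proof -
      have "take s g = take s W" using W2 d(1) by (simp add: s_def)
      also have "\<dots> = take s h" using W1 True take_prefix_app[of s p h] pl by (simp add: p_def[symmetric])
      also have "\<dots> = take s a"
      proof -
        have "s \<le> length a - l" using m1 la s_def by linarith
        then show ?thesis using ph take_take_eq unfolding prof_def by blast
      qed
      finally show ?thesis .
    qed
    have "invw (drop s g) = take d v" using d(3) d(1) by (simp add: s_def take_invw)
    also have "\<dots> = take d a'"
    proof -
      have "d \<le> length a' - l" using m2 la' by simp
      then show ?thesis using pv take_take_eq unfolding prof_def by blast
    qed
    finally have "drop s g = invw (take s a)" using aa by (metis invw_invw)
    then have "g = take s a @ invw (take s a)" using tg by (metis append_take_drop_id)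
    then have "take s a = []" using rg reduced_self_inv_prefix by metis
    then show ?thesis using \<open>g = _\<close> by simp
  next
    case False
    have ha: "h = a \<and> b = a"
    proof (rule ccontr)
      assume "\<not> (h = a \<and> b = a)"
      then have "length a + length b \<le> length h + 2 * l" using ph by (auto simp: prof_def)
      then show False using False m1 la lb s_def p_def by linarith
    qed
    have e1: "p + c = length h" "s + d = length g" using p_def s_def c(1) d(1) by auto
    have cl: "l \<le> c" "l \<le> s" using False m1 ha la e1 by (simp_all add: s_def[symmetric] p_def[symmetric]; linarith)+
    have "take s g = take s W" using W2 d(1) by (simp add: s_def)
    also have "\<dots> = take s h" using W1 m1 take_prefix_app[of s p h] pl by (simp add: p_def[symmetric] s_def[symmetric])
    finally have "take l g = take l a" using cl ha take_take_eq by blast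
    moreover have "take l g = take l (invw a)" using c(3) cl ha take_take_eq by blast
    ultimately show ?thesis using P_take_inv[OF a] by simp
  qed
qed

end

lemma reduce_invw: "reduce (invw X) = invw (reduce X)"
proof -
  have "reduce (invw X) = reduce (invw X @ reduce (X @ invw (reduce X)))"
    by (metis append.right_neutral reduce.simps(1) reduce_append_left reduce_cancel_invw)
  also have "\<dots> = reduce (invw X @ X @ invw (reduce X))"
    by (metis append_assoc reduce_append_right)
  also have "\<dots> = invw (reduce X)" using reduce_cancel_invw'[of X "invw (reduce X)"]
    by (simp add: reduce_reduced)
  finally show ?thesis .
qed

lemma reduce_flat1[simp]: "reduce (reduce X @ Y) = reduce (X @ Y)"
  by (metis reduce_append_left)
lemma reduce_flat2[simp]: "reduce (X @ reduce Y) = reduce (X @ Y)"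
  by (metis reduce_append_right)
lemma reduce_flat3[simp]: "reduce (X @ reduce Y @ Z) = reduce (X @ Y @ Z)"
  by (metis reduce_append_right reduce_flat1)

lemma invw_reduce_simp[simp]: "invw (reduce X) = reduce (invw X)"
  by (simp add: reduce_invw)

definition phi :: "bool \<Rightarrow> 'a letter list \<Rightarrow> 'a letter list" where
  "phi b w = (if b then invw w else w)"

lemma win_invw: "p + l \<le> length h \<Longrightarrow>
  take l (drop p (invw h)) = invw (take l (drop (length h - p - l) h))"
proof -
  assume a: "p + l \<le> length h"
  have "take l (drop p (invw h)) = take l (invw (take (length h - p) h))" by (simp add: drop_invw)
  also have "\<dots> = invw (drop (length h - p - l) (take (length h - p) h))"
    using a by (simp add: take_invw)
  also have "drop (length h - p - l) (take (length h - p) h) = take l (drop (length h - p - l) h)"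
    using a by (simp add: take_drop)
  finally show ?thesis .
qed

locale tup =
  fixes A :: "'a set" and hs :: "'a letter list list" and l n :: nat
  assumes hs_car: "set hs \<subseteq> carrier (free_grp A)"
    and hs_len: "\<And>h. h \<in> set hs \<Longrightarrow> n - l \<le> length h"
    and l_pos': "1 \<le> l" and nl': "8 * l \<le> n"
    and GW: "\<And>i j p q s. i < length hs \<Longrightarrow> j < length hs \<Longrightarrow> p + l \<le> length (hs ! i) \<Longrightarrow>
       q + l \<le> length (hs ! j) \<Longrightarrow> take l (drop p (hs ! i)) = phi s (take l (drop q (hs ! j))) \<Longrightarrow>
       i = j \<and> p = q \<and> \<not> s"
begin

definition pet :: "nat letter \<Rightarrow> 'a letter list" where
  "pet x = phi (snd x) (hs ! fst x)"

abbreviation "D \<equiv> {..<length hs} \<times> (UNIV :: bool set)"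

lemma length_pet[simp]: "length (pet x) = length (hs ! fst x)"
  by (simp add: pet_def phi_def)

lemma pet_inv: "pet (inv_letter x) = invw (pet x)"
  by (simp add: pet_def phi_def inv_letter_def)

lemma pet_win0:
  assumes "x \<in> D" "y \<in> D" "p + l \<le> length (pet x)" "q + l \<le> length (pet y)"
    "take l (drop p (pet x)) = take l (drop q (pet y))"
  shows "x = y \<and> p = q"
proof -
  obtain i b where x: "x = (i, b)" by (cases x)
  obtain j c where y: "y = (j, c)" by (cases y)
  define p' where "p' = (if b then length (hs ! i) - p - l else p)"
  define q' where "q' = (if c then length (hs ! j) - q - l else q)"
  have wx: "take l (drop p (pet x)) = phi b (take l (drop p' (hs ! i)))"
    using assms(3) x by (auto simp: pet_def phi_def p'_def win_invw)
  have wy: "take l (drop q (pet y)) = phi c (take l (drop q' (hs ! j)))"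
    using assms(4) y by (auto simp: pet_def phi_def q'_def win_invw)
  have "take l (drop p' (hs ! i)) = phi (b \<noteq> c) (take l (drop q' (hs ! j)))"
    using assms(5) wx wy by (cases b; cases c) (auto simp: phi_def invw_inj dest: arg_cong[of _ _ invw])
  moreover have "p' + l \<le> length (hs ! i)" "q' + l \<le> length (hs ! j)"
    using assms(3,4) x y by (auto simp: p'_def q'_def)
  ultimately have "i = j \<and> p' = q' \<and> b = c" using GW assms(1,2) x y by blast
  then show ?thesis using assms(3,4) x y by (auto simp: p'_def q'_def split: if_splits)
qed

lemma pet_inj: "x \<in> D \<Longrightarrow> y \<in> D \<Longrightarrow> pet x = pet y \<Longrightarrow> x = y"
proof -
  assume a: "x \<in> D" "y \<in> D" "pet x = pet y"
  have "n - l \<le> length (pet x)" using a(1) hs_len by (cases x) auto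
  then have "0 + l \<le> length (pet x)" using l_pos' nl' by linarith
  then show "x = y" using pet_win0[OF a(1,2), of 0 0] a(3) by auto
qed

lemma hs_nth_car: "i < length hs \<Longrightarrow> hs ! i \<in> carrier (free_grp A)"
  using hs_car nth_mem by blast

lemma pet_car: "x \<in> D \<Longrightarrow> pet x \<in> carrier (free_grp A)"
proof -
  assume "x \<in> D"
  then have "fst x < length hs" by auto
  then have h: "hs ! fst x \<in> carrier (free_grp A)" by (rule hs_nth_car)
  then have "invw (hs ! fst x) \<in> carrier (free_grp A)" by simp
  then show ?thesis using h by (auto simp: pet_def phi_def)
qed

lemma pet_red: "x \<in> D \<Longrightarrow> reduced (pet x)"
  using pet_car by auto

sublocale petals "pet ` D" l n
proof
  fix w assume "w \<in> pet ` D" then show "reduced w" using pet_red by auto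
next
  fix w assume "w \<in> pet ` D"
  then obtain x where "x \<in> D" "w = pet x" by auto
  then show "invw w \<in> pet ` D" using pet_inv[of x] by (intro image_eqI[of _ _ "inv_letter x"]) (auto simp: inv_letter_def)
next
  fix w assume "w \<in> pet ` D" then show "n - l \<le> length w" using hs_len by auto
next
  show "1 \<le> l" "8 * l \<le> n" using l_pos' nl' by auto
next
  fix w1 w2 p1 p2 assume "w1 \<in> pet ` D" "w2 \<in> pet ` D" "p1 + l \<le> length w1" "p2 + l \<le> length w2"
    "take l (drop p1 w1) = take l (drop p2 w2)"
  then show "w1 = w2 \<and> p1 = p2" using pet_win0 by blast
qed

fun rho :: "nat letter list \<Rightarrow> 'a letter list" where
  "rho [] = []"
| "rho (x # U) = reduce (pet x @ rho U)"

lemma reduced_rho: "reduced (rho U)"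
  by (cases U) auto

lemma rho_append: "rho (U @ V) = reduce (rho U @ rho V)"
  by (induction U) (auto simp: reduce_reduced reduced_rho)

lemma rho_reduce: "rho (reduce U) = rho U"
proof (induction U)
  case Nil then show ?case by simp
next
  case (Cons x U)
  show ?case
  proof (cases "reduce U = []")
    case True then show ?thesis using Cons by (simp add: cons_red_def del: reduce.simps(2) add: reduce_Cons')
  next
    case False
    then obtain y r' where Cons2: "reduce U = y # r'" by (cases "reduce U") auto
    show ?thesis
    proof (cases "y = inv_letter x")
      case True
      have "rho (x # U) = reduce (pet x @ rho (y # r'))" using Cons.IH Cons2 by simp
      also have "\<dots> = reduce (pet x @ invw (pet x) @ rho r')" using True by (simp add: pet_inv)
      also have "\<dots> = rho r'" by (simp add: reduce_cancel_invw reduce_reduced reduced_rho)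
      finally show ?thesis using Cons2 True by (simp add: reduce_Cons' cons_red_def del: reduce.simps(2))
    next
      case False
      then show ?thesis using Cons.IH Cons2 by (simp add: reduce_Cons' cons_red_def del: reduce.simps(2))
    qed
  qed
qed

abbreviation "H \<equiv> generate (free_grp A) (set hs)"

lemma grp: "group (free_grp A)" by (rule group_free_grp)

lemma H_sub: "subgroup H (free_grp A)"
  using group.generate_is_subgroup[OF grp hs_car] .

lemma H_car: "h \<in> H \<Longrightarrow> h \<in> carrier (free_grp A)"
  using subgroup.subset[OF H_sub] by (rule subsetD)

lemma H_mult: "a \<in> H \<Longrightarrow> b \<in> H \<Longrightarrow> reduce (a @ b) \<in> H"
  using subgroup.m_closed[OF H_sub, of a b] by simp

lemma H_inv: "a \<in> H \<Longrightarrow> invw a \<in> H"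
proof -
  assume a: "a \<in> H"
  have "inv\<^bsub>free_grp A\<^esub> a \<in> H" using subgroup.m_inv_closed[OF H_sub a] .
  moreover have "inv\<^bsub>free_grp A\<^esub> a = invw a" using inv_free_grp H_car[OF a] by blast
  ultimately show ?thesis by simp
qed

lemma H_one: "[] \<in> H"
  using subgroup.one_closed[OF H_sub] by simp

lemma pet_H: "x \<in> D \<Longrightarrow> pet x \<in> H"
proof -
  assume x: "x \<in> D"
  obtain i b where xe: "x = (i, b)" by (cases x)
  have hi: "hs ! i \<in> set hs" using x xe by auto
  then have "hs ! i \<in> H" by (rule generate.incl)
  then show ?thesis using xe H_inv by (cases b) (auto simp: pet_def phi_def)
qed

lemma rho_H: "fst ` set U \<subseteq> {..<length hs} \<Longrightarrow> rho U \<in> H"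
proof (induction U)
  case Nil then show ?case using H_one by simp
next
  case (Cons x U)
  then have "x \<in> D" by (cases x) auto
  then show ?case using Cons H_mult pet_H by simp
qed

lemma H_rho: "h \<in> H \<Longrightarrow> \<exists>U. fst ` set U \<subseteq> {..<length hs} \<and> reduced U \<and> h = rho U"
proof (induction rule: generate.induct)
  case one then show ?case by (intro exI[of _ "[]"]) simp
next
  case (incl h)
  then obtain i where i: "i < length hs" "h = hs ! i" by (metis in_set_conv_nth)
  have "rho [(i, False)] = h" using i pet_red[of "(i,False)"] by (simp add: pet_def phi_def reduce_reduced)
  then show ?case using i by (intro exI[of _ "[(i, False)]"]) auto
next
  case (inv h)
  then obtain i where i: "i < length hs" "h = hs ! i" by (metis in_set_conv_nth)
  have "rho [(i, True)] = invw h" using i pet_red[of "(i,True)"] by (simp add: pet_def phi_def reduce_reduced)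
  moreover have "inv\<^bsub>free_grp A\<^esub> h = invw h" using inv_free_grp hs_car inv by blast
  ultimately show ?case using i by (intro exI[of _ "[(i, True)]"]) auto
next
  case (eng h1 h2)
  then obtain U V where U: "fst ` set U \<subseteq> {..<length hs}" "h1 = rho U"
    and V: "fst ` set V \<subseteq> {..<length hs}" "h2 = rho V" by blast
  have "h1 \<otimes>\<^bsub>free_grp A\<^esub> h2 = rho (reduce (U @ V))" using U V by (simp add: rho_reduce rho_append)
  moreover have "fst ` set (reduce (U @ V)) \<subseteq> {..<length hs}" using U V set_reduce[of "U @ V"] by (auto simp: image_subset_iff)
  ultimately show ?case by (intro exI[of _ "reduce (U @ V)"]) auto
qed

end

lemma red_car: "x \<in> carrier (free_grp A) \<Longrightarrow> y \<in> carrier (free_grp A) \<Longrightarrow> reduce (x @ y) \<in> carrier (free_grp A)"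
  using set_reduce[of "x @ y"] by (auto simp: image_subset_iff)

lemma reduce_pair1[simp]: "reduce (invw z @ z) = []"
  using reduce_cancel_invw'[of z "[]"] by simp
lemma reduce_pair2[simp]: "reduce (z @ invw z) = []"
  using reduce_cancel_invw[of z "[]"] by simp
lemma reduce_cancel_end1[simp]: "reduce (xs @ z @ invw z) = reduce xs"
  using reduce_mid_cancel[of xs z "[]"] by simp
lemma reduce_cancel_end2[simp]: "reduce (xs @ invw z @ z) = reduce xs"
  using reduce_mid_cancel'[of xs z "[]"] by simp

lemma reduce_flat_end2[simp]: "reduce (X1 @ X2 @ reduce Y) = reduce (X1 @ X2 @ Y)"
  by (metis append_assoc reduce_flat2)
lemma reduce_flat_mid2[simp]: "reduce (X1 @ X2 @ reduce Y @ Z) = reduce (X1 @ X2 @ Y @ Z)"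
  by (metis append_assoc reduce_flat3)
lemma reduce_flat_end3[simp]: "reduce (X1 @ X2 @ X3 @ reduce Y) = reduce (X1 @ X2 @ X3 @ Y)"
  by (metis append_assoc reduce_flat2)
lemma reduce_flat_mid3[simp]: "reduce (X1 @ X2 @ X3 @ reduce Y @ Z) = reduce (X1 @ X2 @ X3 @ Y @ Z)"
  by (metis append_assoc reduce_flat3)
lemma reduce_flat_end4[simp]: "reduce (X1 @ X2 @ X3 @ X4 @ reduce Y) = reduce (X1 @ X2 @ X3 @ X4 @ Y)"
  by (metis append_assoc reduce_flat2)
lemma reduce_flat_mid4[simp]: "reduce (X1 @ X2 @ X3 @ X4 @ reduce Y @ Z) = reduce (X1 @ X2 @ X3 @ X4 @ Y @ Z)"
  by (metis append_assoc reduce_flat3)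
lemma reduce_flat_end5[simp]: "reduce (X1 @ X2 @ X3 @ X4 @ X5 @ reduce Y) = reduce (X1 @ X2 @ X3 @ X4 @ X5 @ Y)"
  by (metis append_assoc reduce_flat2)
lemma reduce_flat_mid5[simp]: "reduce (X1 @ X2 @ X3 @ X4 @ X5 @ reduce Y @ Z) = reduce (X1 @ X2 @ X3 @ X4 @ X5 @ Y @ Z)"
  by (metis append_assoc reduce_flat3)

lemma reduce_canc_mid2[simp]: "reduce (X1 @ X2 @ z @ invw z @ Y) = reduce (X1 @ X2 @ Y)"
  by (metis append_assoc reduce_mid_cancel)
lemma reduce_canc_mid2'[simp]: "reduce (X1 @ X2 @ invw z @ z @ Y) = reduce (X1 @ X2 @ Y)"
  by (metis append_assoc reduce_mid_cancel')
lemma reduce_canc_end2[simp]: "reduce (X1 @ X2 @ z @ invw z) = reduce (X1 @ X2)"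
  by (metis append_assoc reduce_cancel_end1)
lemma reduce_canc_end2'[simp]: "reduce (X1 @ X2 @ invw z @ z) = reduce (X1 @ X2)"
  by (metis append_assoc reduce_cancel_end2)
lemma reduce_canc_mid3[simp]: "reduce (X1 @ X2 @ X3 @ z @ invw z @ Y) = reduce (X1 @ X2 @ X3 @ Y)"
  by (metis append_assoc reduce_mid_cancel)
lemma reduce_canc_mid3'[simp]: "reduce (X1 @ X2 @ X3 @ invw z @ z @ Y) = reduce (X1 @ X2 @ X3 @ Y)"
  by (metis append_assoc reduce_mid_cancel')
lemma reduce_canc_end3[simp]: "reduce (X1 @ X2 @ X3 @ z @ invw z) = reduce (X1 @ X2 @ X3)"
  by (metis append_assoc reduce_cancel_end1)
lemma reduce_canc_end3'[simp]: "reduce (X1 @ X2 @ X3 @ invw z @ z) = reduce (X1 @ X2 @ X3)"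
  by (metis append_assoc reduce_cancel_end2)
lemma reduce_canc_mid4[simp]: "reduce (X1 @ X2 @ X3 @ X4 @ z @ invw z @ Y) = reduce (X1 @ X2 @ X3 @ X4 @ Y)"
  by (metis append_assoc reduce_mid_cancel)
lemma reduce_canc_mid4'[simp]: "reduce (X1 @ X2 @ X3 @ X4 @ invw z @ z @ Y) = reduce (X1 @ X2 @ X3 @ X4 @ Y)"
  by (metis append_assoc reduce_mid_cancel')
lemma reduce_canc_end4[simp]: "reduce (X1 @ X2 @ X3 @ X4 @ z @ invw z) = reduce (X1 @ X2 @ X3 @ X4)"
  by (metis append_assoc reduce_cancel_end1)
lemma reduce_canc_end4'[simp]: "reduce (X1 @ X2 @ X3 @ X4 @ invw z @ z) = reduce (X1 @ X2 @ X3 @ X4)"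
  by (metis append_assoc reduce_cancel_end2)
lemma reduce_canc_mid5[simp]: "reduce (X1 @ X2 @ X3 @ X4 @ X5 @ z @ invw z @ Y) = reduce (X1 @ X2 @ X3 @ X4 @ X5 @ Y)"
  by (metis append_assoc reduce_mid_cancel)
lemma reduce_canc_mid5'[simp]: "reduce (X1 @ X2 @ X3 @ X4 @ X5 @ invw z @ z @ Y) = reduce (X1 @ X2 @ X3 @ X4 @ X5 @ Y)"
  by (metis append_assoc reduce_mid_cancel')
lemma reduce_canc_end5[simp]: "reduce (X1 @ X2 @ X3 @ X4 @ X5 @ z @ invw z) = reduce (X1 @ X2 @ X3 @ X4 @ X5)"
  by (metis append_assoc reduce_cancel_end1)
lemma reduce_canc_end5'[simp]: "reduce (X1 @ X2 @ X3 @ X4 @ X5 @ invw z @ z) = reduce (X1 @ X2 @ X3 @ X4 @ X5)"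
  by (metis append_assoc reduce_cancel_end2)

lemma drop_suffix_app: "m \<le> length Y \<Longrightarrow> drop (length (X @ Y) - m) (X @ Y) = drop (length Y - m) Y"
  by simp

context tup
begin

lemma rho_prof:
  "U \<noteq> [] \<Longrightarrow> reduced U \<Longrightarrow> fst ` set U \<subseteq> {..<length hs} \<Longrightarrow>
   prof (rho U) (pet (hd U)) (pet (last U)) \<and>
   (2 \<le> length U \<longrightarrow> length (pet (hd U)) + length (pet (last U)) \<le> length (rho U) + 2 * l)"
proof (induction U)
  case Nil then show ?case by simp
next
  case (Cons x U)
  have xD: "x \<in> D" using Cons.prems by (cases x) auto
  have px: "pet x \<in> pet ` D" using xD by auto
  have lpx: "7 * l \<le> length (pet x)" using P_len7[OF px] .
  have rpx: "reduced (pet x)" using pet_red[OF xD] .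
  show ?case
  proof (cases "U = []")
    case True
    have "rho [x] = pet x" using rpx by (simp add: reduce_reduced)
    then show ?thesis using True px rpx lpx by (auto simp: prof_def)
  next
    case False
    have rU: "reduced U" and hdU: "hd U \<noteq> inv_letter x" using Cons.prems False by (auto simp: reduced_Cons)
    have sU: "fst ` set U \<subseteq> {..<length hs}" using Cons.prems by auto
    define r where "r = rho U"
    define a where "a = pet (hd U)"
    define b where "b = pet (last U)"
    have IH: "prof r a b" "2 \<le> length U \<longrightarrow> length a + length b \<le> length r + 2 * l"
      using Cons.IH[OF False rU sU] by (auto simp: r_def a_def b_def)
    have "hd U \<in> set U" by (rule hd_in_set[OF False])
    then have hdD: "hd U \<in> D" using sU by (auto simp: image_subset_iff mem_Times_iff)
    have aP: "a \<in> pet ` D" using hdD a_def by auto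
    have bP: "b \<in> pet ` D" using IH by (simp add: prof_def)
    have la: "7 * l \<le> length a" "7 * l \<le> length b" using P_len7 aP bP by auto
    have rr: "reduced r" by (simp add: r_def reduced_rho)
    obtain c where c: "c \<le> length (pet x)" "c \<le> length r" "take c r = take c (invw (pet x))"
      "reduce (pet x @ r) = take (length (pet x) - c) (pet x) @ drop c r"
      using cancel_decomp[OF rpx rr] by auto
    have cl: "c < l"
    proof (rule ccontr)
      assume "\<not> c < l"
      then have "take l r = take l (invw (pet x))" using c(3) take_take_eq by (metis not_less)
      moreover have "take l r = take l a" using IH(1) la take_take_eq[of "length a - l" r a l]
        by (simp add: prof_def)
      ultimately have "take l (drop 0 a) = take l (drop 0 (pet (inv_letter x)))" by (simp add: pet_inv)
      moreover have "inv_letter x \<in> D" using xD by (auto simp: inv_letter_def)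
      moreover have "pet (inv_letter x) \<in> pet ` D" using calculation(2) by auto
      ultimately have "a = pet (inv_letter x)" using P_win[OF aP, of "pet (inv_letter x)" 0 0] la lpx by simp
      then have "hd U = inv_letter x" using pet_inj[OF hdD \<open>inv_letter x \<in> D\<close>] a_def by simp
      then show False using hdU by simp
    qed
    have lr: "length b + 5 * l \<le> length r \<or> (r = a \<and> b = a)"
      using IH(1) la by (auto simp: prof_def)
    have lr2: "length b - l + c \<le> length r" "length b \<le> length r" using lr cl la by auto
    define h' where "h' = reduce (pet x @ r)"
    have h'e: "h' = take (length (pet x) - c) (pet x) @ drop c r" using c(4) h'_def by simp
    have lh': "length h' = length (pet x) - c + (length r - c)" using h'e c by simp
    have p1: "length (pet x) - l \<le> length h'" using lh' cl by simp
    have p2: "take (length (pet x) - l) h' = take (length (pet x) - l) (pet x)"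
      using h'e take_prefix_app[of "length (pet x) - l" "length (pet x) - c" "pet x" "drop c r"] cl c(1) by simp
    have p3: "length b - l \<le> length h'" using lh' lr2 by simp
    have p4: "drop (length h' - (length b - l)) h' = drop l b"
    proof -
      have "drop (length h' - (length b - l)) h' = drop (length (drop c r) - (length b - l)) (drop c r)"
        unfolding h'e by (rule drop_suffix_app) (use lr2 in simp)
      also have "\<dots> = drop (length r - (length b - l)) r" using lr2 by (simp add: add.commute)
      also have "\<dots> = drop l b" using IH(1) by (simp add: prof_def)
      finally show ?thesis .
    qed
    have p5: "length (pet x) + length b \<le> length h' + 2 * l" using lh' lr2 cl c by linarith
    have "prof h' (pet x) b" using px bP p1 p2 p3 p4 p5 by (simp add: prof_def h'_def)
    moreover have "rho (x # U) = h'" by (simp add: h'_def r_def)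
    ultimately show ?thesis using p5 False b_def by simp
  qed
qed

lemma H_prof: "h \<in> H \<Longrightarrow> h \<noteq> [] \<Longrightarrow> \<exists>a b. prof h a b"
proof -
  assume h: "h \<in> H" "h \<noteq> []"
  obtain U where U: "fst ` set U \<subseteq> {..<length hs}" "reduced U" "h = rho U" using H_rho[OF h(1)] by blast
  have "U \<noteq> []" using U h by auto
  then show ?thesis using rho_prof[OF _ U(2,1)] U(3) by blast
qed

lemma H_short: "h \<in> H \<Longrightarrow> length h \<le> n \<Longrightarrow> h = [] \<or> h \<in> pet ` D"
proof -
  assume h: "h \<in> H" "length h \<le> n"
  obtain U where U: "fst ` set U \<subseteq> {..<length hs}" "reduced U" "h = rho U" using H_rho[OF h(1)] by blast
  show ?thesis
  proof (cases U)
    case Nil then show ?thesis using U by simp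
  next
    case (Cons x V)
    have xD: "x \<in> D" using U Cons by (cases x) auto
    show ?thesis
    proof (cases V)
      case Nil
      then have "h = pet x" using U Cons pet_red[OF xD] by (simp add: reduce_reduced)
      then show ?thesis using xD by auto
    next
      case (Cons y W)
      then have "2 \<le> length U" using \<open>U = x # V\<close> by simp
      moreover have "U \<noteq> []" using \<open>U = x # V\<close> by simp
      ultimately have "length (pet (hd U)) + length (pet (last U)) \<le> length h + 2 * l"
        using rho_prof[OF _ U(2,1)] U(3) by blast
      moreover have "pet (hd U) \<in> pet ` D" "pet (last U) \<in> pet ` D" using rho_prof[OF \<open>U \<noteq> []\<close> U(2,1)]
        by (auto simp: prof_def)
      ultimately have False using P_len[of "pet (hd U)"] P_len[of "pet (last U)"] h(2) l_pos nl by linarith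
      then show ?thesis ..
    qed
  qed
qed

lemma conj_back: "reduce (w @ reduce (invw w @ h @ w) @ invw w) = reduce h"
  by (simp add: reduce_cancel_invw reduce_mid_cancel)

lemma mal_core:
  "g \<in> carrier (free_grp A) \<Longrightarrow> h \<in> H \<Longrightarrow> h \<noteq> [] \<Longrightarrow> reduce (invw g @ h @ g) \<in> H \<Longrightarrow> g \<in> H"
proof (induction "length g" arbitrary: g h rule: less_induct)
  case less
  note gc = less.prems(1) and hH = less.prems(2) and hne = less.prems(3) and vH = less.prems(4)
  have rg: "reduced g" using gc by simp
  have rh: "reduced h" using H_car[OF hH] by simp
  show "g \<in> H"
  proof (rule ccontr)
    assume gH: "g \<notin> H"
    have m1: "minl g"
      unfolding minl_def
    proof (intro ballI allI impI)
      fix w j assume w: "w \<in> pet ` D" and j: "j \<le> length g" "j \<le> length w" "take j g = take j w"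
      show "2 * j \<le> length w"
      proof (rule ccontr)
        assume "\<not> 2 * j \<le> length w"
        then have jw: "length w < 2 * j" by simp
        have wH: "w \<in> H" using w pet_H by auto
        have wc: "w \<in> carrier (free_grp A)" using H_car[OF wH] .
        define g' where "g' = reduce (invw w @ g)"
        have "invw w @ g = invw (drop j w) @ invw (take j w) @ take j w @ drop j g"
          using j(3) by (metis append_assoc append_take_drop_id invw_append)
        then have "g' = reduce (invw (drop j w) @ drop j g)"
          by (simp add: g'_def reduce_mid_cancel')
        then have "length g' \<le> length (invw (drop j w) @ drop j g)" using length_reduce_le by metis
        then have lg': "length g' < length g" using j jw by simp
        have iwc: "invw w \<in> carrier (free_grp A)" using wc by simp
        have g'c: "g' \<in> carrier (free_grp A)" unfolding g'_def using red_car[OF iwc gc] .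
        define h' where "h' = reduce (invw w @ h @ w)"
        have h'H: "h' \<in> H" unfolding h'_def using H_mult[OF H_mult[OF H_inv[OF wH] hH] wH] by simp
        have h'ne: "h' \<noteq> []"
        proof
          assume "h' = []"
          then have "reduce h = []" using conj_back[of w h] h'_def by (simp add: reduce_cancel_invw)
          then show False using hne rh by (simp add: reduce_reduced)
        qed
        have "reduce (invw g' @ h' @ g') = reduce (invw g @ h @ g)"
          by (simp add: g'_def h'_def reduce_mid_cancel)
        then have "g' \<in> H" using less.hyps[OF lg' g'c h'H h'ne] vH by simp
        then have "reduce (w @ g') \<in> H" using H_mult wH by blast
        moreover have "reduce (w @ g') = g" by (simp add: g'_def reduce_cancel_invw reduce_reduced rg)
        ultimately show False using gH by simp
      qed
    qed
    have m2: "minl (invw g)"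
      unfolding minl_def
    proof (intro ballI allI impI)
      fix w j assume w: "w \<in> pet ` D" and j: "j \<le> length (invw g)" "j \<le> length w" "take j (invw g) = take j w"
      show "2 * j \<le> length w"
      proof (rule ccontr)
        assume "\<not> 2 * j \<le> length w"
        then have jw: "length w < 2 * j" by simp
        have wH: "w \<in> H" using w pet_H by auto
        have wc: "w \<in> carrier (free_grp A)" using H_car[OF wH] .
        define g' where "g' = reduce (g @ w)"
        have "drop (length g - j) g = invw (take j w)"
          using j(3) j(1) by (metis invw_invw take_invw)
        then have e: "g @ w = take (length g - j) g @ invw (take j w) @ take j w @ drop j w"
          by (metis append_assoc append_take_drop_id)
        have "g' = reduce (take (length g - j) g @ drop j w)"
          unfolding g'_def e by (rule reduce_mid_cancel')
        then have "length g' \<le> length (take (length g - j) g @ drop j w)" using length_reduce_le by metis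
        then have lg': "length g' < length g" using j jw by simp
        have g'c: "g' \<in> carrier (free_grp A)" unfolding g'_def using red_car[OF gc wc] .
        have "reduce (invw g' @ h @ g') = reduce (invw w @ reduce (invw g @ h @ g) @ w)"
          by (simp add: g'_def)
        moreover have "reduce (invw w @ reduce (invw g @ h @ g) @ w) \<in> H"
          using H_mult[OF H_mult[OF H_inv[OF wH] vH] wH] by simp
        ultimately have "g' \<in> H" using less.hyps[OF lg' g'c hH hne] by simp
        then have "reduce (g' @ invw w) \<in> H" using H_mult H_inv wH by blast
        moreover have "reduce (g' @ invw w) = g" by (simp add: g'_def reduce_mid_cancel reduce_reduced rg)
        ultimately show False using gH by simp
      qed
    qed
    define v where "v = reduce (invw g @ h @ g)"
    have vne: "v \<noteq> []"
    proof
      assume "v = []"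
      then have "reduce (g @ v @ invw g) = []" by (simp add: reduce_cancel_invw)
      moreover have "reduce (g @ v @ invw g) = h"
        by (simp add: v_def reduce_cancel_invw reduce_mid_cancel reduce_reduced rh)
      ultimately show False using hne by simp
    qed
    obtain a b where ph: "prof h a b" using H_prof[OF hH hne] by blast
    obtain a' b' where pv: "prof v a' b'" using H_prof[OF _ vne] vH v_def by blast
    have e: "reduce (h @ g) = reduce (g @ v)"
      by (simp add: v_def reduce_cancel_invw)
    have "g = []" using key[OF ph pv rg m1 m2 rh _ e] by (simp add: v_def)
    then show False using gH H_one by simp
  qed
qed

lemma malnormal_H: "malnormal (free_grp A) H"
  unfolding malnormal_def
proof (intro ballI)
  fix g assume g: "g \<in> carrier (free_grp A) - H"
  have ig: "inv\<^bsub>free_grp A\<^esub> g = invw g" using g inv_free_grp by blast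
  have rg: "reduced g" using g by simp
  show "{inv\<^bsub>free_grp A\<^esub> g \<otimes>\<^bsub>free_grp A\<^esub> h \<otimes>\<^bsub>free_grp A\<^esub> g |h. h \<in> H} \<inter> H = {\<one>\<^bsub>free_grp A\<^esub>}"
  proof
    show "{inv\<^bsub>free_grp A\<^esub> g \<otimes>\<^bsub>free_grp A\<^esub> h \<otimes>\<^bsub>free_grp A\<^esub> g |h. h \<in> H} \<inter> H \<subseteq> {\<one>\<^bsub>free_grp A\<^esub>}"
    proof
      fix y assume y: "y \<in> {inv\<^bsub>free_grp A\<^esub> g \<otimes>\<^bsub>free_grp A\<^esub> h \<otimes>\<^bsub>free_grp A\<^esub> g |h. h \<in> H} \<inter> H"
      then obtain h where h: "h \<in> H" "y = reduce (invw g @ h @ g)" using ig by auto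
      show "y \<in> {\<one>\<^bsub>free_grp A\<^esub>}"
      proof (cases "h = []")
        case True then show ?thesis using h by (simp add: reduce_cancel_invw')
      next
        case False then show ?thesis using mal_core[OF _ h(1) False] g y h by auto
      qed
    qed
  next
    have "reduce (invw g @ [] @ g) = []" by (simp add: reduce_cancel_invw')
    then show "{\<one>\<^bsub>free_grp A\<^esub>} \<subseteq> {inv\<^bsub>free_grp A\<^esub> g \<otimes>\<^bsub>free_grp A\<^esub> h \<otimes>\<^bsub>free_grp A\<^esub> g |h. h \<in> H} \<inter> H"
      using ig H_one by force
  qed
qed

end

lemma cyc_decomp: "reduced x \<Longrightarrow> x \<noteq> [] \<Longrightarrow> \<exists>p c. x = p @ c @ invw p \<and> c \<noteq> [] \<and> reduced (c @ c)"
proof (induction "length x" arbitrary: x rule: less_induct)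
  case less
  show ?case
  proof (cases "reduced (x @ x)")
    case True then show ?thesis using less.prems by (intro exI[of _ "[]"] exI[of _ x]) simp
  next
    case False
    then have hl: "hd x = inv_letter (last x)" using less.prems by (auto simp: reduced_append)
    obtain a x' where x: "x = a # x'" using less.prems by (cases x) auto
    have x'ne: "x' \<noteq> []"
    proof
      assume "x' = []" then show False using hl x by simp
    qed
    then obtain y e where x': "x' = y @ [e]" by (metis rev_exhaust)
    have ea: "e = inv_letter a" using hl x x' by simp
    have yne: "y \<noteq> []"
    proof
      assume "y = []" then show False using less.prems x x' ea by simp
    qed
    have ry: "reduced y" using less.prems x x' by (simp add: reduced_Cons reduced_append)
    obtain p c where pc: "y = p @ c @ invw p" "c \<noteq> []" "reduced (c @ c)"
      using less.hyps[OF _ ry yne] x x' by auto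
    have "x = (a # p) @ c @ invw (a # p)" using x x' pc ea by (simp add: invw_Cons)
    then show ?thesis using pc by blast
  qed
qed

lemma reduced_rep: "reduced (c @ c) \<Longrightarrow> c \<noteq> [] \<Longrightarrow> reduced (concat (replicate (Suc m) c))"
proof (induction m)
  case 0 then show ?case by (simp add: reduced_append)
next
  case (Suc m)
  have "concat (replicate (Suc (Suc m)) c) = c @ concat (replicate (Suc m) c)" by simp
  moreover have "hd (concat (replicate (Suc m) c)) = hd c" using Suc.prems by simp
  ultimately show ?case using Suc by (simp add: reduced_append del: replicate.simps concat.simps)
qed

lemma hd_rep: "c \<noteq> [] \<Longrightarrow> hd (concat (replicate (Suc m) c)) = hd c" by simp
lemma last_rep: "c \<noteq> [] \<Longrightarrow> last (concat (replicate (Suc m) c)) = last c"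
  by (induction m) auto

lemma concat_rep_comm: "concat (replicate m c) @ c = c @ concat (replicate m c)"
  by (induction m) auto

lemma reduced_replace_mid:
  "reduced (p @ c @ q) \<Longrightarrow> reduced C \<Longrightarrow> C \<noteq> [] \<Longrightarrow> c \<noteq> [] \<Longrightarrow> hd C = hd c \<Longrightarrow> last C = last c
   \<Longrightarrow> reduced (p @ C @ q)"
  by (auto simp: reduced_append)

lemma pow_decomp:
  assumes x: "x = p @ c @ invw p" "reduced x" "c \<noteq> []" "reduced (c @ c)"
  shows "x [^]\<^bsub>free_grp A\<^esub> (Suc m) = p @ concat (replicate (Suc m) c) @ invw p"
proof (induction m)
  case 0 then show ?case using x by (simp add: reduce_reduced)
next
  case (Suc m)
  define C where "C = concat (replicate (Suc m) c)"
  have "x [^]\<^bsub>free_grp A\<^esub> (Suc (Suc m)) = reduce ((p @ C @ invw p) @ p @ c @ invw p)"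
    using Suc x(1) by (simp add: C_def)
  also have "\<dots> = reduce (p @ (C @ c) @ invw p)" by simp
  also have "C @ c = concat (replicate (Suc (Suc m)) c)"
    by (simp add: C_def concat_rep_comm)
  also have "reduce (p @ concat (replicate (Suc (Suc m)) c) @ invw p) = p @ concat (replicate (Suc (Suc m)) c) @ invw p"
    using reduced_replace_mid[of p c "invw p" "concat (replicate (Suc (Suc m)) c)"] x
      reduced_rep[OF x(4,3)] hd_rep[OF x(3)] last_rep[OF x(3)]
    by (simp add: reduce_reduced del: replicate.simps concat.simps)
  finally show ?case .
qed

lemma torsion_free_nat:
  assumes "x \<in> carrier (free_grp A)" "x \<noteq> []"
  shows "x [^]\<^bsub>free_grp A\<^esub> (Suc m) \<noteq> []"
proof -
  obtain p c where pc: "x = p @ c @ invw p" "c \<noteq> []" "reduced (c @ c)"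
    using cyc_decomp assms by force
  have "x [^]\<^bsub>free_grp A\<^esub> (Suc m) = p @ concat (replicate (Suc m) c) @ invw p"
    using pow_decomp[OF pc(1) _ pc(2,3)] assms by simp
  then show ?thesis using pc(2) by simp
qed

lemma torsion_free:
  assumes "x \<in> carrier (free_grp A)" "x \<noteq> []" "(m::int) \<noteq> 0"
  shows "x [^]\<^bsub>free_grp A\<^esub> m \<noteq> []"
proof (cases "m < 0")
  case True
  then obtain k where k: "nat (-m) = Suc k" by (metis gr0_implies_Suc neg_0_less_iff_less zero_less_nat_eq)
  have c: "x [^]\<^bsub>free_grp A\<^esub> (Suc k) \<in> carrier (free_grp A)"
    using monoid.nat_pow_closed[OF group.is_monoid[OF group_free_grp] assms(1)] .
  have "x [^]\<^bsub>free_grp A\<^esub> m = invw (x [^]\<^bsub>free_grp A\<^esub> (Suc k))"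
    using True k inv_free_grp[OF c] by (simp add: int_pow_def2)
  then show ?thesis using torsion_free_nat[OF assms(1,2), of k] invw_eq_Nil by metis
next
  case False
  then obtain k where k: "nat m = Suc k" using assms(3) by (metis gr0_implies_Suc linorder_neqE_linordered_idom zero_less_nat_eq)
  have "x [^]\<^bsub>free_grp A\<^esub> m = x [^]\<^bsub>free_grp A\<^esub> (Suc k)"
    using False k by (simp add: int_pow_def2)
  then show ?thesis using torsion_free_nat[OF assms(1,2), of k] by metis
qed

context tup
begin

lemma pure_H: "pure (free_grp A) H"
  unfolding pure_def
proof (intro ballI allI impI)
  fix x and m :: int
  assume x: "x \<in> carrier (free_grp A)" and mH: "m \<noteq> 0 \<and> x [^]\<^bsub>free_grp A\<^esub> m \<in> H"
  show "x \<in> H"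
  proof (cases "x = []")
    case True then show ?thesis using H_one by simp
  next
    case False
    define y where "y = x [^]\<^bsub>free_grp A\<^esub> m"
    have yne: "y \<noteq> []" using torsion_free[OF x False] mH y_def by simp
    have yH: "y \<in> H" using mH y_def by simp
    have ry: "reduced y" using H_car[OF yH] by simp
    have "reduce (y @ x) = x [^]\<^bsub>free_grp A\<^esub> (m + 1)"
      using group.int_pow_mult[OF group_free_grp x, of m 1] group.int_pow_1[OF group_free_grp x] y_def by simp
    moreover have "reduce (x @ y) = x [^]\<^bsub>free_grp A\<^esub> (1 + m)"
      using group.int_pow_mult[OF group_free_grp x, of 1 m] group.int_pow_1[OF group_free_grp x] y_def by simp
    ultimately have com: "reduce (y @ x) = reduce (x @ y)" by (simp add: add.commute)
    have "reduce (invw x @ y @ x) = reduce (invw x @ reduce (y @ x))" by simp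
    also have "\<dots> = reduce (invw x @ x @ y)" using com by simp
    also have "\<dots> = y" by (simp add: reduce_cancel_invw' reduce_reduced ry)
    finally have "reduce (invw x @ y @ x) \<in> H" using yH by simp
    then show ?thesis using mal_core[OF x yH yne] by simp
  qed
qed

end

definition RL :: "'a set \<Rightarrow> nat \<Rightarrow> 'a letter list set" where
  "RL A L = {w \<in> carrier (free_grp A). length w = L}"

locale cnt =
  fixes A :: "'a set"
  assumes finA: "finite A" and cardA: "2 \<le> card A"
begin

abbreviation "LTS \<equiv> A \<times> (UNIV :: bool set)"

lemma card_LT: "card LTS = 2 * card A"
  by (simp add: card_cartesian_product)

lemma finite_LT: "finite LTS" using finA by simp

lemma car_sub: "w \<in> carrier (free_grp A) \<Longrightarrow> set w \<subseteq> LTS"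
  by auto

lemma RL_sub: "RL A L \<subseteq> {xs. set xs \<subseteq> LTS \<and> length xs = L}"
  by (auto simp: RL_def)

lemma finite_RL: "finite (RL A L)"
  using finite_subset[OF RL_sub finite_lists_length_eq[OF finite_LT]] .

lemma finite_red_le: "finite (red_le A n)"
proof -
  have "red_le A n \<subseteq> {xs. set xs \<subseteq> LTS \<and> length xs \<le> n}" by (auto simp: red_le_def)
  then show ?thesis using finite_subset finite_lists_length_le[OF finite_LT] by blast
qed

lemma RL_0: "RL A 0 = {[]}" by (auto simp: RL_def)

lemma card_RL_Suc: "card (RL A (Suc L)) = (if L = 0 then 2 * card A else (2 * card A - 1) * card (RL A L))"
proof -
  define B where "B w = {x \<in> LTS. w \<noteq> [] \<longrightarrow> x \<noteq> inv_letter (last w)}" for w :: "'a letter list"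
  have bij: "bij_betw (\<lambda>(w, x). w @ [x]) (SIGMA w:RL A L. B w) (RL A (Suc L))"
  proof (rule bij_betwI')
    fix p p' assume "p \<in> (SIGMA w:RL A L. B w)" "p' \<in> (SIGMA w:RL A L. B w)"
    then show "((\<lambda>(w, x). w @ [x]) p = (\<lambda>(w, x). w @ [x]) p') = (p = p')" by (auto)
  next
    fix p assume "p \<in> (SIGMA w:RL A L. B w)"
    then obtain w x where p: "p = (w, x)" "w \<in> RL A L" "x \<in> B w" by auto
    have "reduced (w @ [x])" using p by (auto simp: RL_def B_def reduced_append)
    then show "(\<lambda>(w, x). w @ [x]) p \<in> RL A (Suc L)" using p by (auto simp: RL_def B_def)
  next
    fix v assume v: "v \<in> RL A (Suc L)"
    then have "v \<noteq> []" by (auto simp: RL_def)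
    then have ve: "v = butlast v @ [last v]" by simp
    have rv0: "reduced v" using v by (simp add: RL_def)
    have rv: "reduced (butlast v @ [last v])" using rv0 ve by metis
    have j: "butlast v \<noteq> [] \<longrightarrow> last v \<noteq> inv_letter (last (butlast v))"
      using rv unfolding reduced_append by simp
    have lv: "last v \<in> set v" using \<open>v \<noteq> []\<close> by simp
    then have "last v \<in> LTS" using v by (auto simp: RL_def mem_Times_iff image_subset_iff)
    then have lB: "last v \<in> B (butlast v)" using j by (simp add: B_def)
    have "reduced (butlast v)" using rv unfolding reduced_append by simp
    then have "butlast v \<in> RL A L" using v
      by (auto simp: RL_def dest: in_set_butlastD)
    moreover note lB
    ultimately show "\<exists>p\<in>(SIGMA w:RL A L. B w). v = (\<lambda>(w, x). w @ [x]) p"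
      using ve by (intro bexI[of _ "(butlast v, last v)"]) auto
  qed
  have finB: "\<forall>w\<in>RL A L. finite (B w)" using finite_LT by (auto simp: B_def)
  have "card (RL A (Suc L)) = card (SIGMA w:RL A L. B w)" using bij_betw_same_card[OF bij] by simp
  also have "\<dots> = (\<Sum>w\<in>RL A L. card (B w))" using card_SigmaI[OF finite_RL finB] .
  finally have e: "card (RL A (Suc L)) = (\<Sum>w\<in>RL A L. card (B w))" .
  show ?thesis
  proof (cases "L = 0")
    case True
    then show ?thesis using e by (simp add: RL_0 B_def card_LT)
  next
    case False
    have "\<forall>w\<in>RL A L. card (B w) = 2 * card A - 1"
    proof
      fix w assume w: "w \<in> RL A L"
      then have wne: "w \<noteq> []" using False by (auto simp: RL_def)
      then have "last w \<in> set w" by simp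
      then have "inv_letter (last w) \<in> LTS" using w by (auto simp: RL_def inv_letter_def)
      moreover have "B w = LTS - {inv_letter (last w)}" using wne by (auto simp: B_def)
      ultimately show "card (B w) = 2 * card A - 1" using finite_LT card_LT by simp
    qed
    then show ?thesis using e False by simp
  qed
qed

abbreviation "N L \<equiv> card (RL A L)"

definition qq :: real where "qq = real (2 * card A - 1)"
definition kap :: real where "kap = real (2 * card A) / qq"

lemma qq_ge3: "3 \<le> qq" using cardA by (simp add: qq_def)
lemma kap_ge1: "1 \<le> kap" using qq_ge3 by (simp add: kap_def qq_def)
lemma kap_le2: "kap \<le> 2" using qq_ge3 cardA by (simp add: kap_def qq_def field_simps)

lemma N_formula: "1 \<le> L \<Longrightarrow> real (N L) = kap * qq ^ L"
proof (induction L)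
  case 0 then show ?case by simp
next
  case (Suc L)
  show ?case
  proof (cases "L = 0")
    case True then show ?thesis using qq_ge3 by (simp add: card_RL_Suc kap_def)
  next
    case False
    have "real (N (Suc L)) = qq * real (N L)"
      using False cardA by (simp add: card_RL_Suc qq_def of_nat_diff)
    then show ?thesis using Suc False by simp
  qed
qed

lemma N_le: "real (N L) \<le> kap * qq ^ L"
  by (cases "L = 0") (use kap_ge1 N_formula in \<open>auto simp: RL_0\<close>)

lemma N_mono_shift: "qq ^ j * real (N L) \<le> real (N (L + j))"
proof (cases "L = 0")
  case True
  show ?thesis
  proof (cases "j = 0")
    case True then show ?thesis using \<open>L = 0\<close> by simp
  next
    case False
    have "real (N (L + j)) = kap * qq ^ j" using N_formula[of "L + j"] False True by simp
    then show ?thesis using True kap_ge1 qq_ge3 by (simp add: RL_0)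
  qed
next
  case False
  then show ?thesis using N_formula[of L] N_formula[of "L + j"] by (simp add: power_add)
qed

lemma block_inj:
  assumes "\<forall>x\<in>S. length x = L \<and> (\<forall>t<m. x ! (b + t) = F t (take (b + t) x))"
    and "b + m \<le> L"
  shows "inj_on (\<lambda>x. (take b x, drop (b + m) x)) S"
proof (rule inj_onI)
  fix x y assume x: "x \<in> S" and y: "y \<in> S" and e: "(take b x, drop (b + m) x) = (take b y, drop (b + m) y)"
  have lx: "length x = L" and ly: "length y = L" using assms x y by auto
  have "\<forall>u<L. x ! u = y ! u"
  proof (intro allI impI)
    fix u show "u < L \<Longrightarrow> x ! u = y ! u"
    proof (induction u rule: less_induct)
      case (less u)
      show ?case
      proof (cases "u < b")
        case True
        then show ?thesis using e by (metis nth_take prod.inject)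
      next
        case False
        show ?thesis
        proof (cases "u < b + m")
          case True
          define t where "t = u - b"
          have ut: "u = b + t" "t < m" using False True t_def by auto
          have "take u x = take u y"
            using less lx ly by (intro nth_equalityI) auto
          then show ?thesis using assms x y ut by auto
        next
          case False
          have "drop (b + m) x ! (u - (b + m)) = drop (b + m) y ! (u - (b + m))" using e by simp
          then show ?thesis using False less.prems lx ly assms(2) by simp
        qed
      qed
    qed
  qed
  then show "x = y" using lx ly by (intro nth_equalityI) auto
qed

lemma block_card:
  assumes "S \<subseteq> RL A L" "\<forall>x\<in>S. \<forall>t<m. x ! (b + t) = F t (take (b + t) x)" "b + m \<le> L" "1 \<le> m"
  shows "real (card S) \<le> 2 * real (N L) / qq ^ m"
proof -
  have inj: "inj_on (\<lambda>x. (take b x, drop (b + m) x)) S"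
    using block_inj[of S L m b F] assms by (auto simp: RL_def)
  have img: "(\<lambda>x. (take b x, drop (b + m) x)) ` S \<subseteq> RL A b \<times> RL A (L - (b + m))"
  proof
    fix y assume "y \<in> (\<lambda>x. (take b x, drop (b + m) x)) ` S"
    then obtain x where x: "x \<in> S" "y = (take b x, drop (b + m) x)" by auto
    have xr: "reduced x" "fst ` set x \<subseteq> A" "length x = L" using assms(1) x(1) by (auto simp: RL_def)
    have "fst ` set (take b x) \<subseteq> A" using xr(2) by (meson image_mono set_take_subset subset_trans)
    moreover have "fst ` set (drop (b + m) x) \<subseteq> A" using xr(2) by (meson image_mono set_drop_subset subset_trans)
    ultimately show "y \<in> RL A b \<times> RL A (L - (b + m))"
      using x(2) xr assms(3) by (auto simp: RL_def reduced_take reduced_drop)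
  qed
  have "card S \<le> card (RL A b \<times> RL A (L - (b + m)))"
    using card_inj_on_le[OF inj img] finite_RL by simp
  then have "real (card S) \<le> real (N b) * real (N (L - (b + m)))"
    by (simp add: card_cartesian_product) (metis of_nat_le_iff of_nat_mult)
  also have "\<dots> \<le> (kap * qq ^ b) * (kap * qq ^ (L - (b + m)))"
    using N_le kap_ge1 qq_ge3 by (intro mult_mono) auto
  also have "\<dots> = kap * (kap * qq ^ (b + (L - (b + m))))" by (simp add: power_add)
  also have "b + (L - (b + m)) = L - m" using assms(3) by simp
  also have "kap * (kap * qq ^ (L - m)) = kap * qq ^ L / qq ^ m * kap"
    using assms(3) qq_ge3 by (simp add: power_diff)
  also have "\<dots> \<le> kap * qq ^ L / qq ^ m * 2" using kap_le2 kap_ge1 qq_ge3 by (intro mult_left_mono) auto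
  also have "kap * qq ^ L = real (N L)" using N_formula[of L] assms(3,4) by simp
  finally show ?thesis by (simp add: mult.commute)
qed

end

context cnt
begin

lemma card_filter: "card {x \<in> red_le A n. P x} = (\<Sum>L\<le>n. card {x \<in> RL A L. P x})"
proof -
  have "{x \<in> red_le A n. P x} = (\<Union>L\<in>{..n}. {x \<in> RL A L. P x})"
    by (auto simp: red_le_def RL_def)
  moreover have "card (\<Union>L\<in>{..n}. {x \<in> RL A L. P x}) = (\<Sum>L\<le>n. card {x \<in> RL A L. P x})"
    by (rule card_UN_disjoint) (auto simp: RL_def intro: finite_subset[OF _ finite_RL])
  ultimately show ?thesis by simp
qed

lemma card_red_le: "card (red_le A n) = (\<Sum>L\<le>n. N L)"
  using card_filter[of n "\<lambda>_. True"] by simp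

lemma sum_over:
  assumes "\<And>L. real (card {x \<in> RL A L. P x}) \<le> 2 * real (N L) / qq ^ m"
  shows "real (card {x \<in> red_le A n. P x}) \<le> 2 * real (card (red_le A n)) / qq ^ m"
proof -
  have "real (card {x \<in> red_le A n. P x}) = (\<Sum>L\<le>n. real (card {x \<in> RL A L. P x}))"
    by (simp add: card_filter)
  also have "\<dots> \<le> (\<Sum>L\<le>n. 2 * real (N L) / qq ^ m)" by (intro sum_mono assms)
  also have "\<dots> = 2 * real (card (red_le A n)) / qq ^ m"
    by (simp add: card_red_le sum_divide_distrib sum_distrib_left)
  finally show ?thesis .
qed

lemma block_card': 
  assumes "\<forall>x\<in>RL A L. P x \<longrightarrow> (\<forall>t<m. x ! (b + t) = F t (take (b + t) x))"
    "\<forall>x\<in>RL A L. P x \<longrightarrow> b + m \<le> L" "1 \<le> m"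
  shows "real (card {x \<in> RL A L. P x}) \<le> 2 * real (N L) / qq ^ m"
proof (cases "b + m \<le> L")
  case True
  show ?thesis by (rule block_card[of _ L m b F]) (use assms True in auto)
next
  case False
  then have e: "{x \<in> RL A L. P x} = {}" using assms(2) by auto
  have "0 \<le> 2 * real (N L) / qq ^ m" using qq_ge3 by simp
  then show ?thesis unfolding e by simp
qed

lemma nth_win: "t < l \<Longrightarrow> p + l \<le> length x \<Longrightarrow> take l (drop p x) ! t = x ! (p + t)"
  by simp

lemma nth_invw_win: "t < l \<Longrightarrow> q + l \<le> length x \<Longrightarrow> invw (take l (drop q x)) ! t = inv_letter (x ! (q + l - 1 - t))"
proof -
  assume a: "t < l" "q + l \<le> length x"
  have "invw (take l (drop q x)) ! t = inv_letter (take l (drop q x) ! (l - Suc t))"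
    using a by (simp add: nth_invw)
  also have "take l (drop q x) ! (l - Suc t) = x ! (q + (l - Suc t))" using a by simp
  also have "q + (l - Suc t) = q + l - 1 - t" using a by simp
  finally show ?thesis .
qed

lemma ev1:
  assumes "1 \<le> l"
  shows "real (card {x \<in> red_le A n. p + l \<le> length x \<and> take l (drop p x) = z})
     \<le> 2 * real (card (red_le A n)) / qq ^ l"
proof (rule sum_over, rule block_card'[where b = p and F = "\<lambda>t _. z ! t"])
  fix L show "\<forall>x\<in>RL A L. p + l \<le> length x \<and> take l (drop p x) = z \<longrightarrow> (\<forall>t<l. x ! (p + t) = z ! t)"
    by (auto simp: nth_win[symmetric])
qed (use assms in \<open>auto simp: RL_def\<close>)

lemma ev2:
  assumes "1 \<le> l" "p \<noteq> q"
  shows "real (card {x \<in> red_le A n. p + l \<le> length x \<and> q + l \<le> length x \<and> take l (drop p x) = take l (drop q x)})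
     \<le> 2 * real (card (red_le A n)) / qq ^ l"
proof (rule sum_over, rule block_card'[where b = "max p q" and F = "\<lambda>t pre. pre ! (min p q + t)"])
  fix L
  show "\<forall>x\<in>RL A L. p + l \<le> length x \<and> q + l \<le> length x \<and> take l (drop p x) = take l (drop q x) \<longrightarrow>
          (\<forall>t<l. x ! (max p q + t) = take (max p q + t) x ! (min p q + t))"
  proof (intro ballI impI allI)
    fix x t assume h: "p + l \<le> length x \<and> q + l \<le> length x \<and> take l (drop p x) = take l (drop q x)" and t: "t < l"
    have "x ! (p + t) = x ! (q + t)" using h t nth_win[of t l p x] nth_win[of t l q x] by simp
    moreover have "min p q + t < max p q + t" using assms(2) by simp
    ultimately show "x ! (max p q + t) = take (max p q + t) x ! (min p q + t)"
      by (auto simp: max_def min_def)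
  qed
qed (use assms in \<open>auto simp: RL_def\<close>)

lemma ev3:
  assumes "1 \<le> l" "p + l \<le> q \<or> q + l \<le> p"
  shows "real (card {x \<in> red_le A n. p + l \<le> length x \<and> q + l \<le> length x \<and> take l (drop p x) = invw (take l (drop q x))})
     \<le> 2 * real (card (red_le A n)) / qq ^ l"
proof (rule sum_over, rule block_card'[where b = "max p q" and F = "\<lambda>t pre. inv_letter (pre ! (min p q + l - 1 - t))"])
  fix L
  show "\<forall>x\<in>RL A L. p + l \<le> length x \<and> q + l \<le> length x \<and> take l (drop p x) = invw (take l (drop q x)) \<longrightarrow>
          (\<forall>t<l. x ! (max p q + t) = inv_letter (take (max p q + t) x ! (min p q + l - 1 - t)))"
  proof (intro ballI impI allI)
    fix x t assume h: "p + l \<le> length x \<and> q + l \<le> length x \<and> take l (drop p x) = invw (take l (drop q x))" and t: "t < l"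
    have h2: "take l (drop q x) = invw (take l (drop p x))" using h by (metis invw_invw)
    have e1: "x ! (p + t) = inv_letter (x ! (q + l - 1 - t))"
    proof -
      have "x ! (p + t) = invw (take l (drop q x)) ! t" using h t nth_win[of t l p x] by simp
      also have "\<dots> = inv_letter (x ! (q + l - 1 - t))" by (rule nth_invw_win) (use t h in auto)
      finally show ?thesis .
    qed
    have e2: "x ! (q + t) = inv_letter (x ! (p + l - 1 - t))"
    proof -
      have "x ! (q + t) = take l (drop q x) ! t" using h t by simp
      also have "\<dots> = invw (take l (drop p x)) ! t" using h2 by simp
      also have "\<dots> = inv_letter (x ! (p + l - 1 - t))" by (rule nth_invw_win) (use t h in auto)
      finally show ?thesis .
    qed
    show "x ! (max p q + t) = inv_letter (take (max p q + t) x ! (min p q + l - 1 - t))"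
      using assms(2) e1 e2 t by (auto simp: max_def min_def)
  qed
qed (use assms in \<open>auto simp: RL_def\<close>)

lemma ev3_overlap:
  assumes "1 \<le> l" "reduced x" "p + l \<le> length x" "q + l \<le> length x" "p \<le> q" "q < p + l"
    "take l (drop p x) = invw (take l (drop q x))"
  shows False
proof -
  have key: "\<And>t. t < l \<Longrightarrow> x ! (p + t) = inv_letter (x ! (q + l - 1 - t))"
  proof -
    fix t assume t: "t < l"
    have "x ! (p + t) = invw (take l (drop q x)) ! t" using assms t nth_win[of t l p x] by simp
    also have "\<dots> = inv_letter (x ! (q + l - 1 - t))" using t assms by (simp add: nth_invw_win)
    finally show "x ! (p + t) = inv_letter (x ! (q + l - 1 - t))" .
  qed
  define s where "s = p + q + l - 1"
  show False
  proof (cases "even s")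
    case True
    then obtain u where u: "s = 2 * u" by blast
    have "p \<le> u" "u < p + l" using u assms(1,5,6) s_def by auto
    then have "x ! u = inv_letter (x ! (q + l - 1 - (u - p)))" using key[of "u - p"] by simp
    moreover have "q + l - 1 - (u - p) = u" using u s_def assms(1,5) \<open>p \<le> u\<close> by simp
    ultimately show False by simp
  next
    case False
    then obtain u where u: "s = 2 * u + 1" by (metis oddE)
    have "p \<le> u"
    proof (rule ccontr)
      assume "\<not> p \<le> u"
      then have "q + l \<le> p + 1" using u s_def by simp
      then have "q = p \<and> l = 1" using assms(1,5) by simp
      then show False using u s_def by presburger
    qed
    have "u < p + l" using u assms(1,5,6) s_def by auto
    then have "x ! u = inv_letter (x ! (q + l - 1 - (u - p)))" using key[of "u - p"] \<open>p \<le> u\<close> by simp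
    moreover have "q + l - 1 - (u - p) = Suc u" using u s_def assms(1,5) \<open>p \<le> u\<close> by simp
    ultimately have "x ! Suc u = inv_letter (x ! u)" by simp
    moreover have "Suc u < length x" using u s_def assms by simp
    ultimately show False using assms(2) by (simp add: reduced_nth)
  qed
qed

lemma ev_len:
  "real (card {x \<in> red_le A n. length x < n - l}) \<le> real (card (red_le A n)) / qq ^ l"
proof -
  have "card {x \<in> red_le A n. length x < n - l} = (\<Sum>L\<le>n. card {x \<in> RL A L. length x < n - l})"
    by (rule card_filter)
  also have "\<dots> = (\<Sum>L\<le>n. if L < n - l then N L else 0)"
  proof (intro sum.cong refl)
    fix L
    show "card {x \<in> RL A L. length x < n - l} = (if L < n - l then N L else 0)"
    proof (cases "L < n - l")
      case True
      then have "{x \<in> RL A L. length x < n - l} = RL A L" by (auto simp: RL_def)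
      then show ?thesis using True by simp
    next
      case False
      then have e: "{x \<in> RL A L. length x < n - l} = {}" by (auto simp: RL_def)
      show ?thesis unfolding e using False by simp
    qed
  qed
  also have "\<dots> = (\<Sum>L\<in>{L \<in> {..n}. L < n - l}. N L)"
    by (rule sum.inter_filter[symmetric]) simp
  also have "{L \<in> {..n}. L < n - l} = {..<n - l}" by auto
  finally have c: "real (card {x \<in> red_le A n. length x < n - l}) = (\<Sum>L\<in>{..<n - l}. real (N L))" by simp
  have "qq ^ l * (\<Sum>L\<in>{..<n - l}. real (N L)) = (\<Sum>L\<in>{..<n - l}. qq ^ l * real (N L))"
    by (simp add: sum_distrib_left)
  also have "\<dots> \<le> (\<Sum>L\<in>{..<n - l}. real (N (L + l)))" by (intro sum_mono N_mono_shift)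
  also have "\<dots> = (\<Sum>L\<in>(\<lambda>L. L + l) ` {..<n - l}. real (N L))"
    by (simp add: sum.reindex)
  also have "\<dots> \<le> (\<Sum>L\<le>n. real (N L))"
    by (intro sum_mono2) auto
  also have "\<dots> = real (card (red_le A n))" by (simp add: card_red_le)
  finally show ?thesis using c qq_ge3 by (simp add: field_simps)
qed

end

lemma card_fixed_coord:
  assumes finR: "finite R" and i: "i < k" and d0: "d0 \<in> R"
  shows "card {ys. length ys = k \<and> set ys \<subseteq> R \<and> ys ! i = d0} \<le> card R ^ (k - 1)"
proof -
  let ?S0 = "{ys. length ys = k \<and> set ys \<subseteq> R \<and> ys ! i = d0}"
  let ?f = "\<lambda>ys. take i ys @ drop (Suc i) ys"
  have inj: "inj_on ?f ?S0"
  proof (rule inj_onI)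
    fix x y assume x: "x \<in> ?S0" and y: "y \<in> ?S0" and e: "?f x = ?f y"
    have lt: "length (take i x) = length (take i y)" using x y i by simp
    then have "take i x = take i y" "drop (Suc i) x = drop (Suc i) y" using e by auto
    then show "x = y" using x y i id_take_nth_drop[of i x] id_take_nth_drop[of i y] by simp
  qed
  have img: "?f ` ?S0 \<subseteq> {xs. set xs \<subseteq> R \<and> length xs = k - 1}"
  proof
    fix z assume "z \<in> ?f ` ?S0"
    then obtain ys where ys: "ys \<in> ?S0" "z = ?f ys" by auto
    have "set (take i ys) \<subseteq> R" "set (drop (Suc i) ys) \<subseteq> R"
      using ys(1) set_take_subset set_drop_subset by fastforce+
    then show "z \<in> {xs. set xs \<subseteq> R \<and> length xs = k - 1}" using ys i by auto
  qed
  have "card ?S0 \<le> card {xs. set xs \<subseteq> R \<and> length xs = k - 1}"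
    using card_inj_on_le[OF inj img finite_lists_length_eq[OF finR]] .
  then show ?thesis using card_lists_length_eq[OF finR] by simp
qed

lemma coord_lemma:
  assumes finR: "finite R" and i: "i < k" and d0: "d0 \<in> R"
    and QM: "\<And>ys. real (card {x \<in> R. Q ys x}) \<le> M"
  shows "real (card {hs. length hs = k \<and> set hs \<subseteq> R \<and> Q (hs[i := d0]) (hs ! i)}) \<le> M * real (card R ^ (k - 1))"
proof -
  let ?S0 = "{ys. length ys = k \<and> set ys \<subseteq> R \<and> ys ! i = d0}"
  let ?E = "{hs. length hs = k \<and> set hs \<subseteq> R \<and> Q (hs[i := d0]) (hs ! i)}"
  have finS0: "finite ?S0"
    by (rule finite_subset[OF _ finite_lists_length_eq[OF finR, of k]]) auto
  have sub: "?E \<subseteq> (\<Union>ys\<in>?S0. (\<lambda>x. ys[i := x]) ` {x \<in> R. Q ys x})"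
  proof
    fix hs assume hs: "hs \<in> ?E"
    have "length (hs[i := d0]) = k" using hs by simp
    moreover have "set (hs[i := d0]) \<subseteq> R" using hs d0 set_update_subset_insert[of hs i d0] by blast
    moreover have "hs[i := d0] ! i = d0" using hs i by simp
    ultimately have "hs[i := d0] \<in> ?S0" by blast
    moreover have "hs ! i \<in> {x \<in> R. Q (hs[i := d0]) x}" using hs i nth_mem by blast
    moreover have "hs = (hs[i := d0])[i := hs ! i]" by simp
    ultimately show "hs \<in> (\<Union>ys\<in>?S0. (\<lambda>x. ys[i := x]) ` {x \<in> R. Q ys x})" by blast
  qed
  have M0: "0 \<le> M" using QM[of undefined] of_nat_0_le_iff order_trans by blast
  have "card ?E \<le> card (\<Union>ys\<in>?S0. (\<lambda>x. ys[i := x]) ` {x \<in> R. Q ys x})"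
    by (rule card_mono[OF _ sub]) (intro finite_UN_I finS0 finite_imageI; use finR in simp)
  also have "\<dots> \<le> (\<Sum>ys\<in>?S0. card ((\<lambda>x. ys[i := x]) ` {x \<in> R. Q ys x}))"
    by (rule card_UN_le[OF finS0])
  also have "\<dots> \<le> (\<Sum>ys\<in>?S0. card {x \<in> R. Q ys x})"
    by (intro sum_mono card_image_le) (use finR in simp)
  finally have "real (card ?E) \<le> (\<Sum>ys\<in>?S0. real (card {x \<in> R. Q ys x}))"
    unfolding of_nat_sum[symmetric] of_nat_le_iff .
  also have "\<dots> \<le> (\<Sum>ys\<in>?S0. M)" by (intro sum_mono QM)
  also have "\<dots> = real (card ?S0) * M" by simp
  also have "\<dots> \<le> real (card R ^ (k - 1)) * M"
    using card_fixed_coord[OF finR i d0] M0 by (intro mult_right_mono) (simp only: of_nat_le_iff, assumption)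
  finally show ?thesis by (simp add: mult.commute)
qed

context cnt
begin

definition TT :: "nat \<Rightarrow> nat \<Rightarrow> 'a letter list list set" where
  "TT n k = {hs. length hs = k \<and> set hs \<subseteq> red_le A n}"

definition goodp :: "nat \<Rightarrow> nat \<Rightarrow> 'a letter list list \<Rightarrow> bool" where
  "goodp n l hs \<longleftrightarrow> (\<forall>i<length hs. n - l \<le> length (hs ! i)) \<and>
     (\<forall>i j p q s. i < length hs \<longrightarrow> j < length hs \<longrightarrow> p + l \<le> length (hs ! i) \<longrightarrow>
        q + l \<le> length (hs ! j) \<longrightarrow> take l (drop p (hs ! i)) = phi s (take l (drop q (hs ! j))) \<longrightarrow>
        i = j \<and> p = q \<and> \<not> s)"

lemma nil_red_le: "[] \<in> red_le A n" by (simp add: red_le_def)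

lemma card_TT: "card (TT n k) = card (red_le A n) ^ k"
  using card_lists_length_eq[OF finite_red_le, of n k] by (simp add: TT_def conj_commute)

lemma finite_TT: "finite (TT n k)"
  using finite_lists_length_eq[OF finite_red_le, of n k] by (simp add: TT_def conj_commute)

abbreviation "cR n \<equiv> real (card (red_le A n))"

lemma single_event:
  assumes l: "1 \<le> l" and nt: "\<not> (i = j \<and> p = q \<and> \<not> s)" and ij: "i < k" "j < k"
  shows "real (card {hs \<in> TT n k. p + l \<le> length (hs ! i) \<and> q + l \<le> length (hs ! j) \<and>
            take l (drop p (hs ! i)) = phi s (take l (drop q (hs ! j)))})
     \<le> 2 * cR n / qq ^ l * real (card (red_le A n) ^ (k - 1))"
proof (cases "i = j")
  case False
  define Q :: "'a letter list list \<Rightarrow> 'a letter list \<Rightarrow> bool" where "Q ys x = (p + l \<le> length x \<and> q + l \<le> length (ys ! j) \<and>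
            take l (drop p x) = phi s (take l (drop q (ys ! j))))" for ys x
  have e: "{hs \<in> TT n k. p + l \<le> length (hs ! i) \<and> q + l \<le> length (hs ! j) \<and>
            take l (drop p (hs ! i)) = phi s (take l (drop q (hs ! j)))}
         = {hs. length hs = k \<and> set hs \<subseteq> red_le A n \<and> Q (hs[i := []]) (hs ! i)}"
    using False by (auto simp: TT_def Q_def)
  have "\<And>ys. real (card {x \<in> red_le A n. Q ys x}) \<le> 2 * cR n / qq ^ l"
  proof -
    fix ys
    have "{x \<in> red_le A n. Q ys x} \<subseteq>
          {x \<in> red_le A n. p + l \<le> length x \<and> take l (drop p x) = phi s (take l (drop q (ys ! j)))}"
      by (auto simp: Q_def)
    then have "card {x \<in> red_le A n. Q ys x} \<le>
          card {x \<in> red_le A n. p + l \<le> length x \<and> take l (drop p x) = phi s (take l (drop q (ys ! j)))}"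
      by (intro card_mono) (auto intro: finite_subset[OF _ finite_red_le])
    then show "real (card {x \<in> red_le A n. Q ys x}) \<le> 2 * cR n / qq ^ l"
      using ev1[OF l, of n p "phi s (take l (drop q (ys ! j)))"] by linarith
  qed
  then show ?thesis unfolding e by (rule coord_lemma[OF finite_red_le ij(1) nil_red_le])
next
  case True
  define P :: "'a letter list \<Rightarrow> bool" where "P x = (p + l \<le> length x \<and> q + l \<le> length x \<and>
            take l (drop p x) = phi s (take l (drop q x)))" for x
  have e: "{hs \<in> TT n k. p + l \<le> length (hs ! i) \<and> q + l \<le> length (hs ! j) \<and>
            take l (drop p (hs ! i)) = phi s (take l (drop q (hs ! j)))}
         = {hs. length hs = k \<and> set hs \<subseteq> red_le A n \<and> (\<lambda>ys x. P x) (hs[i := []]) (hs ! i)}"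
    using True by (auto simp: TT_def P_def)
  have "real (card {x \<in> red_le A n. P x}) \<le> 2 * cR n / qq ^ l"
  proof (cases s)
    case False
    then have "p \<noteq> q" using nt True by auto
    then show ?thesis using ev2[OF l, of p q n] False by (simp add: P_def phi_def)
  next
    case s: True
    show ?thesis
    proof (cases "p + l \<le> q \<or> q + l \<le> p")
      case True
      then show ?thesis using ev3[OF l True, of n] s by (simp add: P_def phi_def)
    next
      case False
      have e0: "{x \<in> red_le A n. P x} = {}"
      proof (rule ccontr)
        assume "{x \<in> red_le A n. P x} \<noteq> {}"
        then obtain x where x: "x \<in> red_le A n" "P x" by auto
        have rx: "reduced x" using x by (simp add: red_le_def)
        have w: "take l (drop p x) = invw (take l (drop q x))" "p + l \<le> length x" "q + l \<le> length x"
          using x s by (auto simp: P_def phi_def)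
        show False
        proof (cases "p \<le> q")
          case True
          then show False using ev3_overlap[OF l rx w(2,3) True _ w(1)] False by linarith
        next
          case nle: False
          have w': "take l (drop q x) = invw (take l (drop p x))" using w(1) by (metis invw_invw)
          show False using ev3_overlap[OF l rx w(3,2) _ _ w'] False nle by linarith
        qed
      qed
      have "0 \<le> 2 * cR n / qq ^ l" using qq_ge3 by simp
      then show ?thesis unfolding e0 by simp
    qed
  qed
  then show ?thesis unfolding e by (intro coord_lemma[OF finite_red_le ij(1) nil_red_le])
qed

lemma len_event:
  assumes "i < k"
  shows "real (card {hs \<in> TT n k. length (hs ! i) < n - l})
     \<le> 2 * cR n / qq ^ l * real (card (red_le A n) ^ (k - 1))"
proof -
  have e: "{hs \<in> TT n k. length (hs ! i) < n - l}
         = {hs. length hs = k \<and> set hs \<subseteq> red_le A n \<and> (\<lambda>ys x. length x < n - l) (hs[i := []]) (hs ! i)}"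
    by (auto simp: TT_def)
  have "real (card {x \<in> red_le A n. length x < n - l}) \<le> 2 * cR n / qq ^ l"
  proof -
    have "0 \<le> cR n / qq ^ l" using qq_ge3 by simp
    then show ?thesis using ev_len[of n l] by simp
  qed
  then show ?thesis unfolding e by (intro coord_lemma[OF finite_red_le assms nil_red_le])
qed

end

context cnt
begin

definition Ev :: "nat \<Rightarrow> nat \<Rightarrow> nat \<Rightarrow> nat \<times> nat \<times> nat \<times> nat \<times> bool \<Rightarrow> 'a letter list list set" where
  "Ev n k l z = (case z of (i, j, p, q, s) \<Rightarrow> {hs \<in> TT n k. p + l \<le> length (hs ! i) \<and> q + l \<le> length (hs ! j) \<and>
            take l (drop p (hs ! i)) = phi s (take l (drop q (hs ! j)))})"

definition Idx :: "nat \<Rightarrow> nat \<Rightarrow> (nat \<times> nat \<times> nat \<times> nat \<times> bool) set" where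
  "Idx n k = {z \<in> {..<k} \<times> {..<k} \<times> {..n} \<times> {..n} \<times> (UNIV :: bool set).
      case z of (i, j, p, q, s) \<Rightarrow> \<not> (i = j \<and> p = q \<and> \<not> s)}"

lemma card_Idx: "card (Idx n k) \<le> 2 * k * k * (n + 1) * (n + 1)"
proof -
  have "card (Idx n k) \<le> card ({..<k} \<times> {..<k} \<times> {..n} \<times> {..n} \<times> (UNIV :: bool set))"
    by (rule card_mono) (auto simp: Idx_def)
  moreover have "card ({..<k} \<times> {..<k} \<times> {..n} \<times> {..n} \<times> (UNIV :: bool set)) = 2 * k * k * (n + 1) * (n + 1)"
    by (simp add: card_cartesian_product algebra_simps)
  ultimately show ?thesis by simp
qed

lemma finite_Idx: "finite (Idx n k)"
  by (rule finite_subset[of _ "{..<k} \<times> {..<k} \<times> {..n} \<times> {..n} \<times> (UNIV :: bool set)"]) (auto simp: Idx_def)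

lemma red_le_len: "x \<in> red_le A n \<Longrightarrow> length x \<le> n" by (simp add: red_le_def)

lemma bad_sub:
  "TT n k - {hs \<in> TT n k. goodp n l hs} \<subseteq>
     (\<Union>i\<in>{..<k}. {hs \<in> TT n k. length (hs ! i) < n - l}) \<union> (\<Union>z\<in>Idx n k. Ev n k l z)"
proof
  fix hs assume hs: "hs \<in> TT n k - {hs \<in> TT n k. goodp n l hs}"
  then have T: "hs \<in> TT n k" and ng: "\<not> goodp n l hs" by auto
  have lk: "length hs = k" using T by (simp add: TT_def)
  have inR: "\<And>i. i < k \<Longrightarrow> hs ! i \<in> red_le A n" using T lk by (auto simp: TT_def)
  show "hs \<in> (\<Union>i\<in>{..<k}. {hs \<in> TT n k. length (hs ! i) < n - l}) \<union> (\<Union>z\<in>Idx n k. Ev n k l z)"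
  proof (cases "\<forall>i<length hs. n - l \<le> length (hs ! i)")
    case False
    then obtain i where "i < k" "length (hs ! i) < n - l" using lk by auto
    then show ?thesis using T by blast
  next
    case True
    then obtain i j p q s where w: "i < k" "j < k" "p + l \<le> length (hs ! i)" "q + l \<le> length (hs ! j)"
      "take l (drop p (hs ! i)) = phi s (take l (drop q (hs ! j)))" "\<not> (i = j \<and> p = q \<and> \<not> s)"
      using ng lk unfolding goodp_def by blast
    have "p \<le> n" "q \<le> n" using w(1-4) red_le_len[OF inR[OF w(1)]] red_le_len[OF inR[OF w(2)]] by auto
    then have "(i, j, p, q, s) \<in> Idx n k" using w by (simp add: Idx_def)
    moreover have "hs \<in> Ev n k l (i, j, p, q, s)" using w T by (simp add: Ev_def)
    ultimately show ?thesis by blast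
  qed
qed

lemma bad_bound:
  assumes l: "1 \<le> l" and k: "1 \<le> k"
  shows "real (card (TT n k - {hs \<in> TT n k. goodp n l hs}))
    \<le> (real k + 2 * real k * real k * (real n + 1) * (real n + 1)) * (2 / qq ^ l) * cR n ^ k"
proof -
  define B where "B = 2 * cR n / qq ^ l * real (card (red_le A n) ^ (k - 1))"
  have Bv: "B = (2 / qq ^ l) * cR n ^ k"
  proof -
    have "cR n ^ k = cR n * cR n ^ (k - 1)" using k by (metis Suc_diff_le diff_Suc_1 power_Suc)
    then show ?thesis by (simp add: B_def)
  qed
  have B0: "0 \<le> B" using qq_ge3 by (simp add: B_def)
  have finT: "finite (TT n k)" by (rule finite_TT)
  have cLen: "\<And>i. i \<in> {..<k} \<Longrightarrow> real (card {hs \<in> TT n k. length (hs ! i) < n - l}) \<le> B"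
    unfolding B_def using len_event by simp
  have cEv: "\<And>z. z \<in> Idx n k \<Longrightarrow> real (card (Ev n k l z)) \<le> B"
  proof -
    fix z assume z: "z \<in> Idx n k"
    obtain i j p q s where ze: "z = (i, j, p, q, s)" by (cases z)
    have "i < k" "j < k" "\<not> (i = j \<and> p = q \<and> \<not> s)" using z ze by (auto simp: Idx_def)
    then show "real (card (Ev n k l z)) \<le> B"
      unfolding B_def ze Ev_def using single_event[OF l] by simp
  qed
  have "card (TT n k - {hs \<in> TT n k. goodp n l hs}) \<le>
        card ((\<Union>i\<in>{..<k}. {hs \<in> TT n k. length (hs ! i) < n - l}) \<union> (\<Union>z\<in>Idx n k. Ev n k l z))"
    by (rule card_mono[OF _ bad_sub]) (intro finite_UnI finite_UN_I; auto simp: Ev_def finite_Idx intro: finite_subset[OF _ finT] split: prod.splits)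
  also have "\<dots> \<le> card (\<Union>i\<in>{..<k}. {hs \<in> TT n k. length (hs ! i) < n - l}) + card (\<Union>z\<in>Idx n k. Ev n k l z)"
    by (rule card_Un_le)
  also have "\<dots> \<le> (\<Sum>i\<in>{..<k}. card {hs \<in> TT n k. length (hs ! i) < n - l}) + (\<Sum>z\<in>Idx n k. card (Ev n k l z))"
    by (intro add_mono card_UN_le finite_Idx) simp
  finally have "real (card (TT n k - {hs \<in> TT n k. goodp n l hs})) \<le>
      (\<Sum>i\<in>{..<k}. real (card {hs \<in> TT n k. length (hs ! i) < n - l})) + (\<Sum>z\<in>Idx n k. real (card (Ev n k l z)))"
    unfolding of_nat_sum[symmetric] of_nat_add[symmetric] of_nat_le_iff .
  also have "\<dots> \<le> (\<Sum>i\<in>{..<k}. B) + (\<Sum>z\<in>Idx n k. B)"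
    by (intro add_mono sum_mono cLen cEv)
  also have "\<dots> = real k * B + real (card (Idx n k)) * B" by simp
  also have "\<dots> \<le> real k * B + (2 * real k * real k * (real n + 1) * (real n + 1)) * B"
  proof -
    have "real (card (Idx n k)) \<le> 2 * real k * real k * (real n + 1) * (real n + 1)"
      using card_Idx[of n k] by (metis (mono_tags) of_nat_1 of_nat_add of_nat_le_iff of_nat_mult of_nat_numeral)
    then show ?thesis using B0 by (intro add_left_mono mult_right_mono) auto
  qed
  also have "\<dots> = (real k + 2 * real k * real k * (real n + 1) * (real n + 1)) * (2 / qq ^ l) * cR n ^ k"
    by (simp add: Bv algebra_simps)
  finally show ?thesis .
qed

end

context tup
begin

lemma card_short: "card {h \<in> H. h \<noteq> [] \<and> length h \<le> n} \<le> 2 * length hs"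
proof -
  have "{h \<in> H. h \<noteq> [] \<and> length h \<le> n} \<subseteq> pet ` D" using H_short by blast
  then have "card {h \<in> H. h \<noteq> [] \<and> length h \<le> n} \<le> card (pet ` D)"
    by (intro card_mono) auto
  also have "\<dots> \<le> card D" by (rule card_image_le) simp
  also have "card D = 2 * length hs" by (simp add: card_cartesian_product)
  finally show ?thesis .
qed

end

context cnt
begin

abbreviation "gen hs \<equiv> generate (free_grp A) (set hs)"

lemma good_tup:
  assumes "1 \<le> l" "8 * l \<le> n" "hs \<in> TT n k" "goodp n l hs"
  shows "tup A hs l n"
proof
  show "set hs \<subseteq> carrier (free_grp A)" using assms(3) by (auto simp: TT_def red_le_def)
next
  fix h assume "h \<in> set hs"
  then obtain i where "i < length hs" "h = hs ! i" by (metis in_set_conv_nth)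
  then show "n - l \<le> length h" using assms(4) by (simp add: goodp_def)
next
  show "1 \<le> l" "8 * l \<le> n" using assms(1,2) by auto
next
  fix i j p q s assume "i < length hs" "j < length hs" "p + l \<le> length (hs ! i)"
       "q + l \<le> length (hs ! j)" "take l (drop p (hs ! i)) = phi s (take l (drop q (hs ! j)))"
  then show "i = j \<and> p = q \<and> \<not> s" using assms(4) unfolding goodp_def by blast
qed

lemma T_eq: "T_set A k n = gen ` TT n k"
  by (simp add: T_set_def TT_def)

lemma good_X:
  assumes "1 \<le> l" "8 * l \<le> n" "hs \<in> TT n k" "goodp n l hs"
  shows "gen hs \<in> X_set A k n"
proof -
  interpret t: tup A hs l n using good_tup[OF assms] .
  show ?thesis using t.malnormal_H t.pure_H assms(3) by (simp add: X_set_def T_eq)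
qed

lemma TX_sub:
  assumes "1 \<le> l" "8 * l \<le> n"
  shows "T_set A k n - X_set A k n \<subseteq> gen ` (TT n k - {hs \<in> TT n k. goodp n l hs})"
proof
  fix H assume H: "H \<in> T_set A k n - X_set A k n"
  then obtain hs where hs: "hs \<in> TT n k" "H = gen hs" by (auto simp: T_eq)
  have "\<not> goodp n l hs" using good_X[OF assms hs(1)] H hs(2) by auto
  then show "H \<in> gen ` (TT n k - {hs \<in> TT n k. goodp n l hs})" using hs by auto
qed

lemma X_sub: "X_set A k n \<subseteq> T_set A k n" by (auto simp: X_set_def)

lemma finite_T: "finite (T_set A k n)" using finite_TT by (simp add: T_eq)

lemma T_ne: "T_set A k n \<noteq> {}"
proof -
  have "replicate k [] \<in> TT n k" using nil_red_le by (simp add: TT_def set_replicate_conv_if)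
  then show ?thesis by (auto simp: T_eq)
qed

lemma good_card:
  assumes l: "1 \<le> l" "8 * l \<le> n"
  shows "card {hs \<in> TT n k. goodp n l hs} \<le> (2 * k) ^ k * card (T_set A k n)"
proof -
  define SH where "SH H = {h \<in> H. h \<noteq> [] \<and> length h \<le> n}" for H :: "'a letter list set"
  let ?G = "{hs \<in> TT n k. goodp n l hs}"
  have SHc: "\<And>H. H \<in> gen ` ?G \<Longrightarrow> card (SH H) \<le> 2 * k"
  proof -
    fix H assume "H \<in> gen ` ?G"
    then obtain hs where hs: "hs \<in> ?G" "H = gen hs" by auto
    interpret t: tup A hs l n using good_tup[OF l] hs(1) by blast
    have "length hs = k" using hs(1) by (simp add: TT_def)
    then show "card (SH H) \<le> 2 * k" using t.card_short hs(2) by (simp add: SH_def)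
  qed
  have SHf: "\<And>H. H \<in> gen ` ?G \<Longrightarrow> finite (SH H)"
  proof -
    fix H assume "H \<in> gen ` ?G"
    then obtain hs where hs: "hs \<in> ?G" "H = gen hs" by auto
    interpret t: tup A hs l n using good_tup[OF l] hs(1) by blast
    have "SH H \<subseteq> red_le A n" using t.H_car hs(2) by (auto simp: SH_def red_le_def)
    then show "finite (SH H)" using finite_subset finite_red_le by blast
  qed
  have sub: "?G \<subseteq> (\<Union>H\<in>gen ` ?G. {hs. set hs \<subseteq> SH H \<and> length hs = k})"
  proof
    fix hs assume hs: "hs \<in> ?G"
    interpret t: tup A hs l n using good_tup[OF l] hs by blast
    have "set hs \<subseteq> SH (gen hs)"
    proof
      fix h assume h: "h \<in> set hs"
      have "h \<in> gen hs" using h by (rule generate.incl)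
      moreover have "n - l \<le> length h" "length h \<le> n" using t.hs_len[OF h] hs h by (auto simp: TT_def red_le_def)
      ultimately show "h \<in> SH (gen hs)" using l by (auto simp: SH_def)
    qed
    then show "hs \<in> (\<Union>H\<in>gen ` ?G. {hs. set hs \<subseteq> SH H \<and> length hs = k})" using hs by (auto simp: TT_def)
  qed
  have fG: "finite (gen ` ?G)" using finite_TT by simp
  have "card ?G \<le> card (\<Union>H\<in>gen ` ?G. {hs. set hs \<subseteq> SH H \<and> length hs = k})"
    by (rule card_mono[OF _ sub]) (intro finite_UN_I fG ballI finite_lists_length_eq SHf)
  also have "\<dots> \<le> (\<Sum>H\<in>gen ` ?G. card {hs. set hs \<subseteq> SH H \<and> length hs = k})"
    by (rule card_UN_le[OF fG])
  also have "\<dots> = (\<Sum>H\<in>gen ` ?G. card (SH H) ^ k)"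
    by (intro sum.cong refl card_lists_length_eq SHf) assumption
  also have "\<dots> \<le> (\<Sum>H\<in>gen ` ?G. (2 * k) ^ k)"
    by (intro sum_mono power_mono SHc) auto
  also have "\<dots> = card (gen ` ?G) * (2 * k) ^ k" by simp
  also have "card (gen ` ?G) \<le> card (T_set A k n)"
    by (intro card_mono finite_T) (auto simp: T_eq)
  finally show ?thesis by (simp add: mult.commute)
qed

end

context cnt
begin

lemma main_est:
  assumes l: "1 \<le> l" "8 * l \<le> n" and k: "1 \<le> k"
    and bet: "(real k + 2 * real k * real k * (real n + 1) * (real n + 1)) * (2 / qq ^ l) \<le> 1 / 2"
  shows "0 \<le> 1 - Q_X A k n \<and> 1 - Q_X A k n \<le> 2 * (2 * real k) ^ k * ((real k + 2 * real k * real k * (real n + 1) * (real n + 1)) * (2 / qq ^ l))"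
proof -
  define \<beta> where "\<beta> = (real k + 2 * real k * real k * (real n + 1) * (real n + 1)) * (2 / qq ^ l)"
  have b0: "0 \<le> \<beta>" using qq_ge3 by (simp add: \<beta>_def)
  define G where "G = {hs \<in> TT n k. goodp n l hs}"
  define Bd where "Bd = TT n k - G"
  define cT where "cT = card (T_set A k n)"
  define cX where "cX = card (X_set A k n)"
  have cT0: "0 < cT" using finite_T T_ne by (simp add: card_gt_0_iff cT_def)
  have cXT: "cX \<le> cT" unfolding cX_def cT_def by (intro card_mono finite_T X_sub)
  have cTX: "card (T_set A k n - X_set A k n) = cT - cX"
    unfolding cX_def cT_def by (intro card_Diff_subset finite_subset[OF X_sub finite_T] X_sub)
  have fB: "finite Bd" unfolding Bd_def by (intro finite_Diff finite_TT)
  have "card (T_set A k n - X_set A k n) \<le> card (gen ` Bd)"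
    using TX_sub[OF l] unfolding Bd_def G_def by (intro card_mono finite_imageI finite_Diff finite_TT)
  also have "\<dots> \<le> card Bd" by (rule card_image_le[OF fB])
  finally have c1: "card (T_set A k n - X_set A k n) \<le> card Bd" .
  have cB: "real (card Bd) \<le> \<beta> * real (card (TT n k))"
  proof -
    have "real (card (TT n k)) = cR n ^ k" by (simp add: card_TT)
    then show ?thesis using bad_bound[OF l(1) k, of n] unfolding Bd_def G_def \<beta>_def by simp
  qed
  have cG: "card G \<le> (2 * k) ^ k * cT" using good_card[OF l] by (simp add: G_def cT_def)
  have cGB: "card G + card Bd = card (TT n k)"
  proof -
    have GT: "G \<subseteq> TT n k" by (auto simp: G_def)
    have "card Bd = card (TT n k) - card G" unfolding Bd_def
      by (rule card_Diff_subset[OF finite_subset[OF GT finite_TT] GT])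
    moreover have "card G \<le> card (TT n k)" by (rule card_mono[OF finite_TT GT])
    ultimately show ?thesis by simp
  qed
  have h1: "real (card (TT n k)) / 2 \<le> real (card G)"
  proof -
    have "\<beta> * real (card (TT n k)) \<le> 1 / 2 * real (card (TT n k))"
      using bet unfolding \<beta>_def[symmetric] by (intro mult_right_mono) auto
    moreover have "real (card G) + real (card Bd) = real (card (TT n k))"
      using cGB by (metis of_nat_add)
    ultimately show ?thesis using cB by linarith
  qed
  have h2: "real (card G) \<le> (2 * real k) ^ k * real cT"
  proof -
    have "real (card G) \<le> real ((2 * k) ^ k * cT)" using cG by (simp only: of_nat_le_iff)
    also have "real ((2 * k) ^ k * cT) = (2 * real k) ^ k * real cT" by simp
    finally show ?thesis .
  qed
  have cTT: "real (card (TT n k)) \<le> 2 * ((2 * real k) ^ k * real cT)" using h1 h2 by linarith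
  have rTX: "real (card (T_set A k n - X_set A k n)) = real cT - real cX" using cTX cXT by (simp add: of_nat_diff)
  have QX: "1 - Q_X A k n = (real cT - real cX) / real cT"
    using cT0 unfolding Q_X_def cT_def[symmetric] cX_def[symmetric] by (simp add: diff_divide_distrib)
  have "real cT - real cX \<le> \<beta> * (2 * ((2 * real k) ^ k * real cT))"
  proof -
    have "real cT - real cX \<le> real (card Bd)" using c1 rTX by linarith
    also have "\<dots> \<le> \<beta> * real (card (TT n k))" by (rule cB)
    also have "\<dots> \<le> \<beta> * (2 * ((2 * real k) ^ k * real cT))"
      by (rule mult_left_mono[OF cTT b0])
    finally show ?thesis .
  qed
  also have "\<beta> * (2 * ((2 * real k) ^ k * real cT)) = (2 * (2 * real k) ^ k * \<beta>) * real cT"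
    by (simp only: mult_ac)
  finally have "(real cT - real cX) / real cT \<le> 2 * (2 * real k) ^ k * \<beta>"
    using cT0 by (simp add: pos_divide_le_eq)
  moreover have "0 \<le> (real cT - real cX) / real cT" using cXT cT0 by simp
  ultimately show ?thesis unfolding QX \<beta>_def by simp
qed

lemma pow3: "exp ((ln 3 / 8) * real n) \<le> 3 * 3 ^ (n div 8)"
proof -
  have "real n \<le> 8 * real (n div 8) + 8"
  proof -
    have "n \<le> 8 * (n div 8) + 8" by linarith
    then show ?thesis by linarith
  qed
  then have "(ln 3 / 8) * real n \<le> (ln 3 / 8) * (8 * real (n div 8) + 8)"
    by (rule mult_left_mono) simp
  also have "\<dots> = real (n div 8) * ln 3 + ln 3" by (simp add: algebra_simps)
  finally have "(ln 3 / 8) * real n \<le> real (n div 8) * ln 3 + ln 3" .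
  then have "exp ((ln 3 / 8) * real n) \<le> exp (real (n div 8) * ln 3 + ln 3)" by simp
  also have "\<dots> = 3 * 3 ^ (n div 8)" by (simp add: exp_add exp_of_nat_mult)
  finally show ?thesis .
qed

lemma beta_le:
  assumes "1 \<le> k"
  shows "(real k + 2 * real k * real k * (real n + 1) * (real n + 1)) * (2 / qq ^ (n div 8))
     \<le> 18 * real k ^ 2 * ((real n + 1) ^ 2 * exp (- (ln 3 / 8) * real n))"
proof -
  have a: "real k + 2 * real k * real k * (real n + 1) * (real n + 1) \<le> 3 * real k ^ 2 * (real n + 1) ^ 2"
  proof -
    have "real k \<le> real k ^ 2" using assms by (simp add: power2_eq_square)
    also have "\<dots> \<le> real k ^ 2 * (real n + 1) ^ 2"
    proof -
      have "1 \<le> (real n + 1) ^ 2" by (rule one_le_power) simp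
      then show ?thesis using mult_left_mono[of 1 "(real n + 1) ^ 2" "real k ^ 2"] by simp
    qed
    finally show ?thesis by (simp add: power2_eq_square algebra_simps)
  qed
  have b: "2 / qq ^ (n div 8) \<le> 6 * exp (- (ln 3 / 8) * real n)"
  proof -
    have "(3::real) ^ (n div 8) \<le> qq ^ (n div 8)" using qq_ge3 by (intro power_mono) auto
    then have "2 / qq ^ (n div 8) \<le> 2 / 3 ^ (n div 8)" using qq_ge3 by (intro divide_left_mono) auto
    also have "\<dots> = 6 / (3 * 3 ^ (n div 8))" by simp
    also have "\<dots> \<le> 6 / exp ((ln 3 / 8) * real n)"
      by (rule divide_left_mono[OF pow3]) auto
    also have "\<dots> = 6 * exp (- (ln 3 / 8) * real n)" by (simp add: exp_minus field_simps)
    finally show ?thesis .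
  qed
  have "(real k + 2 * real k * real k * (real n + 1) * (real n + 1)) * (2 / qq ^ (n div 8))
      \<le> (3 * real k ^ 2 * (real n + 1) ^ 2) * (6 * exp (- (ln 3 / 8) * real n))"
    using a b qq_ge3 by (intro mult_mono) auto
  then show ?thesis by (simp add: algebra_simps)
qed

theorem final:
  assumes k: "1 \<le> k"
  shows "\<exists>c>0. (\<lambda>n. 1 - Q_X A k n) \<in> O(\<lambda>n. exp (- c * real n))"
proof (intro exI conjI)
  show "0 < ln (3::real) / 16" by simp
  define F where "F n = (real n + 1) ^ 2 * exp (- (ln 3 / 8) * real n)" for n :: nat
  have asy1: "F \<in> O(\<lambda>n. exp (- (ln 3 / 16) * real n))" unfolding F_def by real_asymp
  have asy2: "F \<longlonglongrightarrow> 0" unfolding F_def by real_asymp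
  define C where "C = 36 * real k ^ 2 * (2 * real k) ^ k"
  have ev: "eventually (\<lambda>n. F n < 1 / (36 * real k ^ 2)) sequentially"
    using order_tendstoD(2)[OF asy2] k by simp
  have "eventually (\<lambda>n. norm (1 - Q_X A k n) \<le> C * norm (F n)) sequentially"
    using ev eventually_ge_at_top[of 8]
  proof eventually_elim
    case (elim n)
    define l where "l = n div 8"
    have l1: "1 \<le> l" "8 * l \<le> n" using elim(2) by (auto simp: l_def)
    have Fn: "0 \<le> F n" by (simp add: F_def)
    have bl: "(real k + 2 * real k * real k * (real n + 1) * (real n + 1)) * (2 / qq ^ l) \<le> 18 * real k ^ 2 * F n"
      using beta_le[OF k, of n] by (simp add: F_def l_def)
    have "18 * real k ^ 2 * F n \<le> 1 / 2"
      using elim(1) k by (simp add: field_simps)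
    then have "(real k + 2 * real k * real k * (real n + 1) * (real n + 1)) * (2 / qq ^ l) \<le> 1 / 2"
      using bl by linarith
    from main_est[OF l1 k this]
    have m: "0 \<le> 1 - Q_X A k n"
      "1 - Q_X A k n \<le> 2 * (2 * real k) ^ k * ((real k + 2 * real k * real k * (real n + 1) * (real n + 1)) * (2 / qq ^ l))"
      by auto
    have "1 - Q_X A k n \<le> 2 * (2 * real k) ^ k * (18 * real k ^ 2 * F n)"
      using m(2) bl by (smt (verit) mult_left_mono zero_le_power of_nat_0_le_iff mult_nonneg_nonneg)
    then show ?case using m(1) Fn by (simp add: C_def algebra_simps)
  qed
  then have "(\<lambda>n. 1 - Q_X A k n) \<in> O(F)" by (rule bigoI)
  then show "(\<lambda>n. 1 - Q_X A k n) \<in> O(\<lambda>n. exp (- (ln 3 / 16) * real n))"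
    using asy1 by (rule landau_o.big_trans)
qed

end


theorem mainTheorem5:
  fixes A :: "'a set" and k :: nat
  assumes "finite A" and "card A \<ge> 2" and "k \<ge> 1"
  shows "\<exists>c>0. (\<lambda>n. 1 - Q_X A k n) \<in> O(\<lambda>n. exp (- c * real n))"
proof -
  interpret c: cnt A using assms(1,2) by unfold_locales auto
  show ?thesis using c.final[OF assms(3)] .
qed

end
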